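(* Let $D,W,V,K$ be positive integers, $M:=VK$, and let $\mathcal{D}\in\mathbb{R}^{W\times M}$ with $\mathrm{rank}(\mathcal{D})=D$. Let $\mathcal{D}_\square$ be a $D\times D$ submatrix of $\mathcal{D}$ with $\mathrm{rank}(\mathcal{D}_\square)=D$, with row index set $I\subseteq\{1,\dots,W\}$ and column index set $L\subseteq\{1,\dots,M\}$. Fix $\sharp\in\{\mathrm{st},\mathrm{m}\}$, let $\bar\sharp$ denote the other element of $\{\mathrm{st},\mathrm{m}\}$, and let $\theta(1),\dots,\theta(J)$ be index pairs in $\{1,\dots,W\}^{\times2}$ if $\sharp=\mathrm{st}$, resp. in $\{1,\dots,M\}^{\times2}$ if $\sharp=\mathrm{m}$, together with real numbers $c_1,\dots,c_J$. Call $P'=(P'_{\mathrm{st}}\,|\,P'_{\mathrm{m}})$ with $P'_{\mathrm{st}}\in\mathbb{R}^{D\times W}$, $P'_{\mathrm{m}}\in\mathbb{R}^{D\times M}$ compatible if $(P'_{\mathrm{st}})^TP'_{\mathrm{m}}=\mathcal{D}$ and $\bigl((P'_\sharp)^TP'_\sharp\bigr)_{\theta(j)}=c_j$ for all $j=1,\dots,J$. Let $P^{(0)}_{\mathrm{st}}\in\mathbb{R}^{D\times W}$, $P^{(0)}_{\mathrm{m}}\in\mathbb{R}^{D\times M}$ satisfy $(P^{(0)}_{\mathrm{st}})^TP^{(0)}_{\mathrm{m}}=\mathcal{D}$, let $P=(P_{\mathrm{st}}\,|\,P_{\mathrm{m}})$ be compatible, and let $A\in GL(\mathbb{R}^D)$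 satisfy $P_{\mathrm{st}}=A^{-T}P^{(0)}_{\mathrm{st}}$ and $P_{\mathrm{m}}=AP^{(0)}_{\mathrm{m}}$. Let $R^{(0)}_{\mathrm{st}}\in\mathbb{R}^{D\times D}$ be the submatrix of $P^{(0)}_{\mathrm{st}}$ formed by the columns with indices in $I$, and $R^{(0)}_{\mathrm{m}}\in\mathbb{R}^{D\times D}$ the submatrix of $P^{(0)}_{\mathrm{m}}$ formed by the columns with indices in $L$ (so $(R^{(0)}_{\mathrm{st}})^TR^{(0)}_{\mathrm{m}}=\mathcal{D}_\square$). For $j=1,\dots,J$, writing $\theta(j)=(\theta(j)_1,\theta(j)_2)$ and $\vec p_i$ for the $i$-th column of $P^{(0)}_\sharp$, set $$B_j:=\tfrac12\bigl(\vec p_{\theta(j)_1}\vec p_{\theta(j)_2}^{\,T}+\vec p_{\theta(j)_2}\vec p_{\theta(j)_1}^{\,T}\bigr).$$ Then $A^TA$ is uniquely determined (i.e. $A'^TA'=A^TA$ for every $A'\in GL(\mathbb{R}^D)$ such that $(A'^{-T}P^{(0)}_{\mathrm{st}}\,|\,A'P^{(0)}_{\mathrm{m}})$ is compatible) if and only if $$\mathrm{rank}\Bigl(\mathrm{vec}\bigl(R^{(0)}_{\bar\sharp}B_1(R^{(0)}_{\bar\sharp})^T\bigr)\Bigm|\cdots\Bigm|\mathrm{vec}\bigl(R^{(0)}_{\bar\sharp}B_J(R^{(0)}_{\bar\sharp})^T\bigr)\Bigr)=\tfrac12D(D+1).$$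
   Context: For a matrix $X$, $\mathrm{vec}(X)$ denotes the column vector obtained by stacking the columns of $X$ on top of each other. $GL(\mathbb{R}^D)$ is the group of invertible real $D\times D$ matrices, and $A^{-T}=(A^{-1})^T$. *)

theory Defs
  imports "Jordan_Normal_Form.DL_Rank_Submatrix"
begin

datatype sharp = St | Mm

fun other :: "sharp \<Rightarrow> sharp" where
  "other St = Mm"
| "other Mm = St"

fun sel :: "sharp \<Rightarrow> 'a \<Rightarrow> 'a \<Rightarrow> 'a" where
  "sel St x y = x"
| "sel Mm x y = y"

definition inv_mat :: "real mat \<Rightarrow> real mat" where
  "inv_mat A = (THE B. inverts_mat A B \<and> inverts_mat B A)"

definition vectorize :: "'a mat \<Rightarrow> 'a vec" where
  "vectorize X = vec (dim_row X * dim_col X) (\<lambda>k. X $$ (k mod dim_row X, k div dim_row X))"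

definition outer :: "'a :: semiring_0 vec \<Rightarrow> 'a vec \<Rightarrow> 'a mat" where
  "outer u v = mat (dim_vec u) (dim_vec v) (\<lambda>(i,j). u $ i * v $ j)"

text \<open>Compatibility of (P'_st | P'_m); indices are 0-based.\<close>
definition compatible ::
  "nat \<Rightarrow> nat \<Rightarrow> nat \<Rightarrow> real mat \<Rightarrow> sharp \<Rightarrow> nat \<Rightarrow> (nat \<Rightarrow> nat \<times> nat) \<Rightarrow> (nat \<Rightarrow> real)
   \<Rightarrow> real mat \<Rightarrow> real mat \<Rightarrow> bool" where
  "compatible D W M Dm s J \<theta> c Pst Pm \<longleftrightarrow>
     Pst \<in> carrier_mat D W \<and> Pm \<in> carrier_mat D M \<and>
     transpose_mat Pst * Pm = Dm \<and>
     (\<forall>j<J. (transpose_mat (sel s Pst Pm) * sel s Pst Pm) $$ \<theta> j = c j)"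

end

theory Submission
  imports Defs "Jordan_Normal_Form.Gram_Schmidt"
begin


lemma inv_carrier_aux:
  assumes A: "A \<in> carrier_mat n n" and AB: "inverts_mat A B" and BA: "inverts_mat B A"
  shows "B \<in> carrier_mat n n" "A * B = 1\<^sub>m n" "B * A = 1\<^sub>m n"
proof -
  have 1: "A * B = 1\<^sub>m n" using AB A unfolding inverts_mat_def by auto
  have 2: "B * A = 1\<^sub>m (dim_row B)" using BA unfolding inverts_mat_def by auto
  have "dim_col B = n" using arg_cong[OF 1, of dim_col] by simp
  moreover have "dim_row B = n" using arg_cong[OF 2, of dim_col] A by simp
  ultimately show B: "B \<in> carrier_mat n n" by auto
  show "A * B = 1\<^sub>m n" by fact
  show "B * A = 1\<^sub>m n" using 2 B by auto
qed

lemma inv_mat_props: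
  assumes A: "A \<in> carrier_mat n n" and inv: "invertible_mat A"
  shows "inv_mat A \<in> carrier_mat n n" "A * inv_mat A = 1\<^sub>m n" "inv_mat A * A = 1\<^sub>m n"
proof -
  from inv obtain B where AB: "inverts_mat A B" "inverts_mat B A" unfolding invertible_mat_def by auto
  note B = inv_carrier_aux[OF A AB]
  have "inv_mat A = B" unfolding inv_mat_def
  proof (rule the_equality)
    show "inverts_mat A B \<and> inverts_mat B A" using AB by auto
    fix B' assume "inverts_mat A B' \<and> inverts_mat B' A"
    note B' = inv_carrier_aux[OF A conjunct1[OF this] conjunct2[OF this]]
    have "B' = B' * (A * B)" using B' B right_mult_one_mat[OF B'(1)] by simp
    also have "\<dots> = (B' * A) * B" using B'(1) B(1) A by simp
    also have "\<dots> = B" using B' B left_mult_one_mat[OF B(1)] by simp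
    finally show "B' = B" .
  qed
  thus "inv_mat A \<in> carrier_mat n n" "A * inv_mat A = 1\<^sub>m n" "inv_mat A * A = 1\<^sub>m n"
    using B by auto
qed

lemma invertible_matI:
  assumes A: "(A :: real mat) \<in> carrier_mat n n" and B: "B \<in> carrier_mat n n" and AB: "A * B = 1\<^sub>m n"
  shows "invertible_mat A"
proof -
  have BA: "B * A = 1\<^sub>m n" using mat_mult_left_right_inverse[OF A B AB] .
  show ?thesis unfolding invertible_mat_def inverts_mat_def square_mat.simps
    using A B AB BA by (intro conjI exI[of _ B]) auto
qed

lemma inv_mat_eq:
  assumes A: "(A :: real mat) \<in> carrier_mat n n" and B: "B \<in> carrier_mat n n" and AB: "A * B = 1\<^sub>m n"
  shows "inv_mat A = B"
proof -
  have iA: "invertible_mat A" using invertible_matI[OF A B AB] .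
  note P = inv_mat_props[OF A iA]
  have "inv_mat A = inv_mat A * (A * B)" using P B AB right_mult_one_mat[OF P(1)] by simp
  also have "\<dots> = (inv_mat A * A) * B" using assoc_mult_mat[OF P(1) A B] by simp
  also have "\<dots> = 1\<^sub>m n * B" by (simp only: P(3))
  also have "\<dots> = B" using left_mult_one_mat[OF B] by simp
  finally show ?thesis .
qed

lemma det_inverse_exists:
  assumes A: "(A :: real mat) \<in> carrier_mat n n" and d: "det A \<noteq> 0"
  shows "\<exists>B \<in> carrier_mat n n. A * B = 1\<^sub>m n \<and> B * A = 1\<^sub>m n"
proof -
  have "A \<in> Units (ring_mat TYPE(real) n undefined)" by (rule det_non_zero_imp_unit[OF A d])
  then obtain B where "B \<in> carrier_mat n n" "B * A = 1\<^sub>m n" "A * B = 1\<^sub>m n"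
    unfolding Units_def ring_mat_def by auto
  thus ?thesis by auto
qed

lemma invertible_det:
  assumes A: "(A :: real mat) \<in> carrier_mat n n" and inv: "invertible_mat A"
  shows "det A \<noteq> 0"
proof -
  note P = inv_mat_props[OF A inv]
  have "det A * det (inv_mat A) = 1" using det_mult[OF A P(1)] P(2) by simp
  thus ?thesis by auto
qed

lemma transpose_inv:
  assumes A: "(A :: real mat) \<in> carrier_mat n n" and inv: "invertible_mat A"
  shows "transpose_mat A * transpose_mat (inv_mat A) = 1\<^sub>m n"
        "transpose_mat (inv_mat A) * transpose_mat A = 1\<^sub>m n"
proof -
  note P = inv_mat_props[OF A inv]
  have "transpose_mat A * transpose_mat (inv_mat A) = transpose_mat (inv_mat A * A)"
    using transpose_mult[OF P(1) A] by simp
  also have "\<dots> = 1\<^sub>m n" unfolding P(3) by simp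
  finally show "transpose_mat A * transpose_mat (inv_mat A) = 1\<^sub>m n" .
  have "transpose_mat (inv_mat A) * transpose_mat A = transpose_mat (A * inv_mat A)"
    using transpose_mult[OF A P(1)] by simp
  also have "\<dots> = 1\<^sub>m n" unfolding P(2) by simp
  finally show "transpose_mat (inv_mat A) * transpose_mat A = 1\<^sub>m n" .
qed



definition bf :: "nat \<Rightarrow> real mat \<Rightarrow> (nat \<Rightarrow> real) \<Rightarrow> (nat \<Rightarrow> real) \<Rightarrow> real" where
  "bf n M u v = (\<Sum>p<n. \<Sum>q<n. u p * M $$ (p,q) * v q)"

fun gsb :: "nat \<Rightarrow> real mat \<Rightarrow> nat \<Rightarrow> nat \<Rightarrow> real" where
  "gsb n M k j = (if j = k then 1 else 0) -
     (\<Sum>i<k. bf n M (\<lambda>q. if q = k then 1 else 0) (\<lambda>q. gsb n M i q) /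
              bf n M (\<lambda>q. gsb n M i q) (\<lambda>q. gsb n M i q) * gsb n M i j)"

declare gsb.simps[simp del]

lemma bf_sym:
  assumes M: "M \<in> carrier_mat n n" and sym: "transpose_mat M = M"
  shows "bf n M u v = bf n M v u"
proof -
  have Mpq: "M $$ (p,q) = M $$ (q,p)" if "p < n" "q < n" for p q
  proof -
    have "M $$ (p,q) = transpose_mat M $$ (p,q)" using sym by simp
    also have "\<dots> = M $$ (q,p)" using M that by simp
    finally show ?thesis .
  qed
  have "bf n M u v = (\<Sum>q<n. \<Sum>p<n. u p * M $$ (p,q) * v q)"
    unfolding bf_def by (rule sum.swap)
  also have "\<dots> = bf n M v u" unfolding bf_def
    by (intro sum.cong refl, simp add: Mpq mult.commute mult.left_commute)
  finally show ?thesis .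
qed

lemma bf_lin2:
  assumes "finite A"
  shows "bf n M u (\<lambda>q. f q - (\<Sum>i\<in>A. c i * g i q)) = bf n M u f - (\<Sum>i\<in>A. c i * bf n M u (g i))"
proof -
  have "bf n M u (\<lambda>q. f q - (\<Sum>i\<in>A. c i * g i q)) =
        (\<Sum>p<n. \<Sum>q<n. u p * M $$ (p,q) * f q - (\<Sum>i\<in>A. c i * (u p * M $$ (p,q) * g i q)))"
    unfolding bf_def
    by (intro sum.cong refl, simp add: right_diff_distrib sum_distrib_left mult.commute mult.left_commute)
  also have "\<dots> = bf n M u f - (\<Sum>p<n. \<Sum>q<n. \<Sum>i\<in>A. c i * (u p * M $$ (p,q) * g i q))"
    unfolding bf_def by (simp add: sum_subtractf)
  also have "(\<Sum>p<n. \<Sum>q<n. \<Sum>i\<in>A. c i * (u p * M $$ (p,q) * g i q)) =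
             (\<Sum>p<n. \<Sum>i\<in>A. \<Sum>q<n. c i * (u p * M $$ (p,q) * g i q))"
    by (intro sum.cong refl, rule sum.swap)
  also have "\<dots> = (\<Sum>i\<in>A. \<Sum>p<n. \<Sum>q<n. c i * (u p * M $$ (p,q) * g i q))"
    by (rule sum.swap)
  also have "\<dots> = (\<Sum>i\<in>A. c i * bf n M u (g i))"
    unfolding bf_def by (simp add: sum_distrib_left)
  finally show ?thesis .
qed

lemma mult_index_sum:
  assumes A: "A \<in> carrier_mat n m" and B: "B \<in> carrier_mat m k" and i: "i < n" and j: "j < k"
  shows "(A * B) $$ (i,j) = (\<Sum>p<m. A $$ (i,p) * B $$ (p,j))"
  using A B i j by (simp add: scalar_prod_def lessThan_atLeast0)

lemma triple_index:
  assumes A: "A \<in> carrier_mat n n" and B: "B \<in> carrier_mat n n" and C: "C \<in> carrier_mat n n"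
    and i: "i < n" and j: "j < n"
  shows "(A * B * C) $$ (i,j) = (\<Sum>q<n. (\<Sum>p<n. A $$ (i,p) * B $$ (p,q)) * C $$ (q,j))"
proof -
  have AB: "A * B \<in> carrier_mat n n" using A B by simp
  have "(A * B * C) $$ (i,j) = (\<Sum>q<n. (A * B) $$ (i,q) * C $$ (q,j))"
    by (rule mult_index_sum[OF AB C i j])
  also have "\<dots> = (\<Sum>q<n. (\<Sum>p<n. A $$ (i,p) * B $$ (p,q)) * C $$ (q,j))"
    by (intro sum.cong refl, subst mult_index_sum[OF A B i], auto)
  finally show ?thesis .
qed

locale gs_setup =
  fixes n :: nat and M :: "real mat"
  assumes M: "M \<in> carrier_mat n n" and sym: "transpose_mat M = M"
    and pd: "\<And>x. (\<exists>p<n. x p \<noteq> 0) \<Longrightarrow> bf n M x x > 0"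
begin

definition b :: "nat \<Rightarrow> nat \<Rightarrow> real" where "b k = (\<lambda>q. gsb n M k q)"
definition d :: "nat \<Rightarrow> real" where "d k = bf n M (b k) (b k)"
definition e :: "nat \<Rightarrow> nat \<Rightarrow> real" where "e k = (\<lambda>q. if q = k then 1 else 0)"
definition c :: "nat \<Rightarrow> nat \<Rightarrow> real" where "c k i = bf n M (e k) (b i) / d i"

lemma b_eq: "b k j = e k j - (\<Sum>i<k. c k i * b i j)"
  unfolding b_def e_def c_def d_def by (subst gsb.simps, simp add: b_def)

lemma b_fun: "b k = (\<lambda>j. e k j - (\<Sum>i<k. c k i * b i j))"
  by (rule ext, rule b_eq)

lemma props: "k < n \<Longrightarrow> (\<forall>j>k. b k j = 0) \<and> b k k = 1 \<and> (\<forall>i<k. bf n M (b i) (b k) = 0) \<and> d k > 0"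
proof (induction k rule: less_induct)
  case (less k)
  have IH: "\<And>i. i < k \<Longrightarrow> (\<forall>j>i. b i j = 0) \<and> b i i = 1 \<and> (\<forall>l<i. bf n M (b l) (b i) = 0) \<and> d i > 0"
    using less by auto
  have 1: "\<forall>j>k. b k j = 0"
  proof (intro allI impI)
    fix j assume "j > k"
    hence "e k j = 0" "\<forall>i<k. b i j = 0" using IH \<open>j > k\<close> unfolding e_def by auto
    thus "b k j = 0" by (subst b_eq, simp)
  qed
  have 2: "b k k = 1"
  proof -
    have "\<forall>i<k. b i k = 0" using IH by auto
    thus ?thesis by (subst b_eq, simp add: e_def)
  qed
  have orth: "bf n M (b i) (b l) = 0" if "i < k" "l < k" "i \<noteq> l" for i l
  proof (cases "i < l")
    case True thus ?thesis using IH[OF \<open>l < k\<close>] by auto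
  next
    case False
    hence "l < i" using that by auto
    hence "bf n M (b l) (b i) = 0" using IH[OF \<open>i < k\<close>] by auto
    thus ?thesis using bf_sym[OF M sym, of "b l" "b i"] by simp
  qed
  have 3: "\<forall>i<k. bf n M (b i) (b k) = 0"
  proof (intro allI impI)
    fix i assume ik: "i < k"
    have "bf n M (b i) (b k) = bf n M (b i) (e k) - (\<Sum>l<k. c k l * bf n M (b i) (b l))"
      by (subst b_fun, rule bf_lin2, simp)
    also have "(\<Sum>l<k. c k l * bf n M (b i) (b l)) = (\<Sum>l<k. if l = i then c k i * d i else 0)"
      by (intro sum.cong refl, insert orth ik, auto simp: d_def)
    also have "\<dots> = c k i * d i" using ik by simp
    also have "\<dots> = bf n M (e k) (b i)" unfolding c_def using IH[OF ik] by simp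
    also have "\<dots> = bf n M (b i) (e k)" by (rule bf_sym[OF M sym])
    finally show "bf n M (b i) (b k) = 0" by simp
  qed
  have 4: "d k > 0" unfolding d_def using 2 less.prems by (intro pd, auto)
  show ?case using 1 2 3 4 by auto
qed

definition P :: "real mat" where "P = mat n n (\<lambda>(p,k). b k p / sqrt (d k))"

lemma P_carrier: "P \<in> carrier_mat n n" unfolding P_def by simp

lemma PMP: "transpose_mat P * M * P = 1\<^sub>m n"
proof (rule eq_matI)
  fix k l assume "k < dim_row (1\<^sub>m n :: real mat)" "l < dim_col (1\<^sub>m n :: real mat)"
  hence k: "k < n" and l: "l < n" by auto
  have "(transpose_mat P * M * P) $$ (k,l) =
    (\<Sum>q<n. (\<Sum>p<n. transpose_mat P $$ (k,p) * M $$ (p,q)) * P $$ (q,l))"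
    by (rule triple_index[OF _ M P_carrier k l], insert P_carrier, auto)
  also have "\<dots> = (\<Sum>q<n. \<Sum>p<n. b k p * M $$ (p,q) * b l q / (sqrt (d k) * sqrt (d l)))"
    using k l by (intro sum.cong refl, simp add: P_def sum_distrib_right sum_divide_distrib divide_divide_eq_left)
  also have "\<dots> = (\<Sum>p<n. \<Sum>q<n. b k p * M $$ (p,q) * b l q / (sqrt (d k) * sqrt (d l)))"
    by (rule sum.swap)
  also have "\<dots> = bf n M (b k) (b l) / (sqrt (d k) * sqrt (d l))"
    unfolding bf_def by (simp add: sum_divide_distrib)
  also have "\<dots> = (1\<^sub>m n :: real mat) $$ (k,l)"
  proof (cases "k = l")
    case True
    have "d k > 0" using props[OF k] by auto
    hence sq: "sqrt (d k) * sqrt (d k) = d k" by simp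
    have "bf n M (b k) (b l) / (sqrt (d k) * sqrt (d l)) = d k / (sqrt (d k) * sqrt (d k))"
      using True by (simp add: d_def)
    also have "\<dots> = d k / d k" by (simp only: sq)
    also have "\<dots> = 1" using \<open>d k > 0\<close> by simp
    also have "1 = (1\<^sub>m n :: real mat) $$ (k,l)" using True k by simp
    finally show ?thesis .
  next
    case False
    have "bf n M (b k) (b l) = 0"
    proof (cases "k < l")
      case True thus ?thesis using props[OF l] by auto
    next
      case F: False
      hence "l < k" using False by auto
      hence "bf n M (b l) (b k) = 0" using props[OF k] by auto
      thus ?thesis using bf_sym[OF M sym, of "b l" "b k"] by simp
    qed
    thus ?thesis using False k l by simp
  qed
  finally show "(transpose_mat P * M * P) $$ (k,l) = (1\<^sub>m n :: real mat) $$ (k,l)" .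
qed (insert P_carrier M, auto)

lemma det_P: "det P \<noteq> 0"
proof -
  have ut: "upper_triangular P" unfolding upper_triangular_def
  proof (intro allI impI)
    fix i j assume "i < dim_row P" "j < i"
    hence "i < n" "j < n" using P_carrier by auto
    thus "P $$ (i,j) = 0" using props[OF \<open>j < n\<close>] \<open>j < i\<close> unfolding P_def by auto
  qed
  have "det P = prod_list (diag_mat P)" by (rule det_upper_triangular[OF ut P_carrier])
  also have "\<dots> \<noteq> 0"
  proof
    assume "prod_list (diag_mat P) = 0"
    then obtain i where i: "i < n" "P $$ (i,i) = 0" unfolding prod_list_zero_iff diag_mat_def
      using P_carrier by auto
    have "P $$ (i,i) = 1 / sqrt (d i)" using i props[OF i(1)] unfolding P_def by simp
    moreover have "d i > 0" using props[OF i(1)] by auto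
    ultimately show False using i by simp
  qed
  finally show ?thesis .
qed

end

lemma pd_factor:
  assumes M: "M \<in> carrier_mat n n" and sym: "transpose_mat M = M"
    and pd: "\<And>x. (\<exists>p<n. x p \<noteq> 0) \<Longrightarrow> bf n M x x > 0"
  shows "\<exists>W \<in> carrier_mat n n. det W \<noteq> 0 \<and> transpose_mat W * W = M"
proof -
  interpret gs_setup n M using assms by unfold_locales auto
  obtain Q where Q: "Q \<in> carrier_mat n n" "P * Q = 1\<^sub>m n" "Q * P = 1\<^sub>m n"
    using det_inverse_exists[OF P_carrier det_P] by auto
  have PT: "transpose_mat P \<in> carrier_mat n n" using P_carrier by simp
  have QT: "transpose_mat Q \<in> carrier_mat n n" using Q by simp
  have PM: "transpose_mat P * M \<in> carrier_mat n n" using PT M by simp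
  have PMP': "transpose_mat P * M * P \<in> carrier_mat n n" using PM P_carrier by simp
  have PQ: "P * Q \<in> carrier_mat n n" using P_carrier Q by simp
  have "transpose_mat Q * Q = transpose_mat Q * (transpose_mat P * M * P) * Q"
    using PMP QT right_mult_one_mat[OF QT] by simp
  also have "\<dots> = transpose_mat Q * (transpose_mat P * M * P * Q)"
    by (rule assoc_mult_mat[OF QT PMP' Q(1)])
  also have "transpose_mat P * M * P * Q = transpose_mat P * M * (P * Q)"
    by (rule assoc_mult_mat[OF PM P_carrier Q(1)])
  also have "transpose_mat Q * (transpose_mat P * M * (P * Q)) = transpose_mat Q * (transpose_mat P * M) * (P * Q)"
    by (rule assoc_mult_mat[OF QT PM PQ, symmetric])
  also have "transpose_mat Q * (transpose_mat P * M) = transpose_mat Q * transpose_mat P * M"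
    by (rule assoc_mult_mat[OF QT PT M, symmetric])
  also have "transpose_mat Q * transpose_mat P = transpose_mat (P * Q)"
    by (rule transpose_mult[OF P_carrier Q(1), symmetric])
  also have "transpose_mat (P * Q) * M * (P * Q) = M" using Q(2) M by simp
  finally have "transpose_mat Q * Q = M" .
  moreover have "det Q \<noteq> 0" using det_mult[OF P_carrier Q(1)] Q(2) by auto
  ultimately show ?thesis using Q(1) by auto
qed


lemma abs_prod_le_sq: "2 * \<bar>(a::real) * b\<bar> \<le> a * a + b * b"
proof -
  have "0 \<le> (\<bar>a\<bar> - \<bar>b\<bar>) * (\<bar>a\<bar> - \<bar>b\<bar>)" by simp
  hence "2 * (\<bar>a\<bar> * \<bar>b\<bar>) \<le> \<bar>a\<bar> * \<bar>a\<bar> + \<bar>b\<bar> * \<bar>b\<bar>" by (simp add: algebra_simps)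
  thus ?thesis by (simp add: abs_mult)
qed

lemma pd_perturb:
  assumes Y: "Y \<in> carrier_mat n n"
  shows "\<exists>\<epsilon>>0. \<forall>x. (\<exists>p<n. x p \<noteq> 0) \<longrightarrow> bf n (1\<^sub>m n + \<epsilon> \<cdot>\<^sub>m Y) x x > 0"
proof -
  define \<sigma> where "\<sigma> = (\<Sum>p<n. \<Sum>q<n. \<bar>Y $$ (p,q)\<bar>)"
  have \<sigma>0: "\<sigma> \<ge> 0" unfolding \<sigma>_def by (intro sum_nonneg, auto)
  define \<epsilon> where "\<epsilon> = 1 / (1 + \<sigma>)"
  have \<epsilon>0: "\<epsilon> > 0" unfolding \<epsilon>_def using \<sigma>0 by simp
  have main: "bf n (1\<^sub>m n + \<epsilon> \<cdot>\<^sub>m Y) x x > 0" if nz: "\<exists>p<n. x p \<noteq> 0" for x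
  proof -
    define S where "S = (\<Sum>p<n. x p * x p)"
    have sq_le: "x p * x p \<le> S" if "p < n" for p
      unfolding S_def by (rule member_le_sum, insert that, auto)
    obtain p0 where p0: "p0 < n" "x p0 \<noteq> 0" using nz by auto
    have "0 < x p0 * x p0" using p0(2) by (metis mult_pos_pos mult_neg_neg linorder_neqE_linordered_idom)
    hence Spos: "S > 0" using sq_le[OF p0(1)] by simp
    have split: "bf n (1\<^sub>m n + \<epsilon> \<cdot>\<^sub>m Y) x x = S + \<epsilon> * bf n Y x x"
    proof -
      have "bf n (1\<^sub>m n + \<epsilon> \<cdot>\<^sub>m Y) x x = (\<Sum>p<n. \<Sum>q<n. (if q = p then x p * x p else 0) + \<epsilon> * (x p * Y $$ (p,q) * x q))"
        unfolding bf_def using Y by (intro sum.cong refl, auto simp: algebra_simps)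
      also have "\<dots> = (\<Sum>p<n. x p * x p + \<epsilon> * (\<Sum>q<n. x p * Y $$ (p,q) * x q))"
        by (intro sum.cong refl, simp add: sum.distrib sum_distrib_left)
      also have "\<dots> = S + \<epsilon> * bf n Y x x"
        unfolding S_def bf_def by (simp add: sum.distrib sum_distrib_left)
      finally show ?thesis .
    qed
    have bound: "\<bar>bf n Y x x\<bar> \<le> \<sigma> * S"
    proof -
      have "\<bar>bf n Y x x\<bar> \<le> (\<Sum>p<n. \<bar>\<Sum>q<n. x p * Y $$ (p,q) * x q\<bar>)"
        unfolding bf_def by (rule sum_abs)
      also have "\<dots> \<le> (\<Sum>p<n. \<Sum>q<n. \<bar>x p * Y $$ (p,q) * x q\<bar>)"
        by (intro sum_mono sum_abs)
      also have "\<dots> \<le> (\<Sum>p<n. \<Sum>q<n. \<bar>Y $$ (p,q)\<bar> * S)"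
      proof (intro sum_mono)
        fix p q assume p: "p \<in> {..<n}" and q: "q \<in> {..<n}"
        have "2 * \<bar>x p * x q\<bar> \<le> x p * x p + x q * x q" by (rule abs_prod_le_sq)
        also have "\<dots> \<le> 2 * S" using sq_le[of p] sq_le[of q] p q by simp
        finally have "\<bar>x p * x q\<bar> \<le> S" by simp
        hence "\<bar>Y $$ (p,q)\<bar> * \<bar>x p * x q\<bar> \<le> \<bar>Y $$ (p,q)\<bar> * S" by (intro mult_left_mono, auto)
        thus "\<bar>x p * Y $$ (p,q) * x q\<bar> \<le> \<bar>Y $$ (p,q)\<bar> * S" by (simp add: abs_mult algebra_simps)
      qed
      also have "\<dots> = \<sigma> * S" unfolding \<sigma>_def by (simp add: sum_distrib_right)
      finally show ?thesis .
    qed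
    have "\<epsilon> * \<bar>bf n Y x x\<bar> \<le> \<epsilon> * (\<sigma> * S)" using bound \<epsilon>0 by (intro mult_left_mono, auto)
    moreover have "\<epsilon> * (\<sigma> * S) < S"
    proof -
      have "\<epsilon> * (\<sigma> * S) = S * (\<sigma> / (1 + \<sigma>))" unfolding \<epsilon>_def by simp
      also have "\<dots> < S * 1" using Spos \<sigma>0 by (intro mult_strict_left_mono, auto)
      finally show ?thesis by simp
    qed
    moreover have "- (\<epsilon> * \<bar>bf n Y x x\<bar>) \<le> \<epsilon> * bf n Y x x" using \<epsilon>0
      by (metis abs_ge_minus_self abs_mult abs_of_pos minus_le_iff)
    ultimately show ?thesis unfolding split by linarith
  qed
  show ?thesis using \<epsilon>0 main by blast
qed



definition SymV :: "nat \<Rightarrow> real vec set" where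
  "SymV D = {z \<in> carrier_vec (D*D). \<forall>a<D. \<forall>b<D. z $ (a + b*D) = z $ (b + a*D)}"
definition ev :: "nat \<Rightarrow> nat \<Rightarrow> nat \<Rightarrow> real vec" where
  "ev D a b = vec (D*D) (\<lambda>k. if k = a + b*D \<or> k = b + a*D then 1 else 0)"
definition Pr :: "nat \<Rightarrow> (nat \<times> nat) set" where "Pr D = {(a,b). a \<le> b \<and> b < D}"
definition Es :: "nat \<Rightarrow> real vec set" where "Es D = (\<lambda>(a,b). ev D a b) ` Pr D"

lemma idx_eq:
  assumes "a < (D::nat)" "c < D"
  shows "(a + b*D = c + d*D) \<longleftrightarrow> (a = c \<and> b = d)"
proof
  assume h: "a + b*D = c + d*D"
  have "(a + b*D) mod D = a" "(c + d*D) mod D = c" using assms by auto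
  hence ac: "a = c" using h by metis
  hence "b*D = d*D" using h by simp
  thus "a = c \<and> b = d" using ac assms by simp
qed auto

lemma idx_lt:
  assumes "a < (D::nat)" "b < D"
  shows "a + b*D < D*D"
proof -
  have "a + b*D < D + b*D" using assms by simp
  also have "\<dots> = (b+1)*D" by simp
  also have "\<dots> \<le> D*D" using assms by (intro mult_le_mono1, simp)
  finally show ?thesis .
qed

lemma idx_decomp:
  assumes "k < (D::nat)*D"
  shows "k = k mod D + (k div D)*D" "k mod D < D" "k div D < D"
proof -
  have D: "D > 0" using assms by (cases D, auto)
  show "k = k mod D + (k div D)*D" by simp
  show "k mod D < D" using D by simp
  show "k div D < D" using assms by (simp add: less_mult_imp_div_less)
qed

lemma card_Pr2: "2 * card (Pr D) = D * (D + 1)"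
proof (induction D)
  case 0 thus ?case by (simp add: Pr_def)
next
  case (Suc D)
  have eq: "Pr (Suc D) = Pr D \<union> (\<lambda>a. (a, D)) ` {..D}" unfolding Pr_def by auto
  have disj: "Pr D \<inter> (\<lambda>a. (a, D)) ` {..D} = {}" unfolding Pr_def by auto
  have fin: "finite (Pr D)"
  proof -
    have "Pr D \<subseteq> {..<D} \<times> {..<D}" unfolding Pr_def by auto
    thus ?thesis by (rule finite_subset, simp)
  qed
  have c2: "card ((\<lambda>a. (a, D)) ` {..D}) = D + 1"
    by (subst card_image, auto simp: inj_on_def)
  have "card (Pr (Suc D)) = card (Pr D) + (D + 1)"
    unfolding eq by (subst card_Un_disjoint[OF fin _ disj], auto simp: c2)
  thus ?case using Suc by simp
qed

lemma card_Pr: "card (Pr D) = D * (D + 1) div 2"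
  using card_Pr2[of D] by simp

lemma finite_Pr: "finite (Pr D)"
proof -
  have "Pr D \<subseteq> {..<D} \<times> {..<D}" unfolding Pr_def by auto
  thus ?thesis by (rule finite_subset, simp)
qed

lemma ev_index: "k < D*D \<Longrightarrow> ev D a b $ k = (if k = a + b*D \<or> k = b + a*D then 1 else 0)"
  unfolding ev_def by simp

lemma ev_carrier: "ev D a b \<in> carrier_vec (D*D)" unfolding ev_def by simp

lemma ev_SymV: assumes ab: "a < D" "b < D" shows "ev D a b \<in> SymV D"
  unfolding SymV_def
proof (intro CollectI conjI allI impI, rule ev_carrier)
  fix a' b' assume "a' < D" "b' < D"
  thus "ev D a b $ (a' + b'*D) = ev D a b $ (b' + a'*D)"
    using idx_lt[of a' D b'] idx_lt[of b' D a'] 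
      idx_eq[of a' D a b' b] idx_eq[of a' D b b' a] idx_eq[of b' D a a' b] idx_eq[of b' D b a' a] ab
    by (auto simp: ev_index)
qed

lemma ev_inj: "inj_on (\<lambda>(a,b). ev D a b) (Pr D)"
proof (rule inj_onI, clarify)
  fix a b a' b' assume ab: "(a,b) \<in> Pr D" and ab': "(a',b') \<in> Pr D" and eq: "ev D a b = ev D a' b'"
  have lt: "a < D" "b < D" "a' < D" "b' < D" "a \<le> b" "a' \<le> b'" using ab ab' unfolding Pr_def by auto
  have "ev D a' b' $ (a + b*D) = 1" unfolding eq[symmetric] using idx_lt[OF lt(1,2)] by (simp add: ev_index)
  hence "a + b*D = a' + b'*D \<or> a + b*D = b' + a'*D" using idx_lt[OF lt(1,2)] by (simp add: ev_index split: if_splits)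
  thus "a = a' \<and> b = b'" using lt idx_eq[of a D a' b b'] idx_eq[of a D b' b a'] by auto
qed

lemma card_Es: "card (Es D) = D * (D + 1) div 2"
  unfolding Es_def card_image[OF ev_inj] card_Pr ..

lemma Es_sub: "Es D \<subseteq> SymV D" unfolding Es_def Pr_def using ev_SymV by auto

lemma SymV_carrier: "SymV D \<subseteq> carrier_vec (D*D)" unfolding SymV_def by auto

lemma SymV_entry: "x \<in> SymV D \<Longrightarrow> i < D \<Longrightarrow> j < D \<Longrightarrow> x $ (i + j*D) = x $ (j + i*D)"
  unfolding SymV_def by blast


lemma ev_index_Pr:
  assumes "(i,j) \<in> Pr D" "k < D*D"
  shows "ev D i j $ k = (if (i, j) = (min (k mod D) (k div D), max (k mod D) (k div D)) then 1 else 0)"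
proof -
  have ij: "i < D" "j < D" "i \<le> j" using assms(1) unfolding Pr_def by auto
  note kd = idx_decomp[OF assms(2)]
  have "(k = i + j*D \<or> k = j + i*D) \<longleftrightarrow> ((i,j) = (k mod D, k div D) \<or> (j,i) = (k mod D, k div D))"
    using idx_eq[of i D "k mod D" j "k div D"] idx_eq[of j D "k mod D" i "k div D"] ij kd by auto
  also have "\<dots> \<longleftrightarrow> (i, j) = (min (k mod D) (k div D), max (k mod D) (k div D))"
    using ij by (auto simp: min_def max_def)
  finally show ?thesis using assms(2) by (simp add: ev_index)
qed

lemma minmax_Pr: "k < D*D \<Longrightarrow> (min (k mod D) (k div D), max (k mod D) (k div D)) \<in> Pr D"
  using idx_decomp[of k D] unfolding Pr_def by auto

context fixes D :: nat
begin

interpretation V: cof_vec_space "D*D" "TYPE(real)" .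

lemma lincomb_SymV:
  assumes A: "A \<subseteq> SymV D" "finite A"
  shows "V.lincomb a A \<in> SymV D"
proof -
  have Ac: "A \<subseteq> carrier_vec (D*D)" using A SymV_carrier by auto
  have dim: "dim_vec (V.lincomb a A) = D*D" by (rule V.lincomb_dim[OF A(2) Ac])
  show ?thesis unfolding SymV_def
  proof (intro CollectI conjI allI impI)
    show "V.lincomb a A \<in> carrier_vec (D*D)" using dim by (intro carrier_vecI)
    fix i j assume ij: "i < D" "j < D"
    have "V.lincomb a A $ (i + j*D) = (\<Sum>x\<in>A. a x * x $ (i + j*D))"
      by (rule V.lincomb_index[OF idx_lt[OF ij] Ac])
    also have "\<dots> = (\<Sum>x\<in>A. a x * x $ (j + i*D))"
      using A ij SymV_entry[of _ D i j] by (intro sum.cong refl) auto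
    also have "\<dots> = V.lincomb a A $ (j + i*D)"
      by (rule V.lincomb_index[OF idx_lt[OF ij(2,1)] Ac, symmetric])
    finally show "V.lincomb a A $ (i + j*D) = V.lincomb a A $ (j + i*D)" .
  qed
qed

lemma span_SymV:
  assumes T: "T \<subseteq> SymV D"
  shows "V.span T \<subseteq> SymV D"
proof
  fix w assume "w \<in> V.span T"
  then obtain a A where "w = V.lincomb a A" "finite A" "A \<subseteq> T" unfolding V.span_def by auto
  thus "w \<in> SymV D" using lincomb_SymV[of A a] T by (metis subset_trans)
qed

lemma orth_span:
  assumes T: "T \<subseteq> carrier_vec (D*D)" and z: "z \<in> carrier_vec (D*D)"
    and orth: "\<forall>t\<in>T. t \<bullet> z = 0" and w: "w \<in> V.span T"
  shows "w \<bullet> z = 0"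
proof -
  obtain a A where wA: "w = V.lincomb a A" "finite A" "A \<subseteq> T" using w unfolding V.span_def by auto
  have Ac: "A \<subseteq> carrier_vec (D*D)" using wA T by auto
  have "w \<bullet> z = (\<Sum>k<D*D. w $ k * z $ k)" using z by (simp add: scalar_prod_def lessThan_atLeast0)
  also have "\<dots> = (\<Sum>k<D*D. (\<Sum>x\<in>A. a x * x $ k) * z $ k)"
    unfolding wA(1) by (intro sum.cong refl, subst V.lincomb_index[OF _ Ac], auto)
  also have "\<dots> = (\<Sum>k<D*D. \<Sum>x\<in>A. a x * (x $ k * z $ k))"
    by (simp add: sum_distrib_right mult.assoc)
  also have "\<dots> = (\<Sum>x\<in>A. a x * (\<Sum>k<D*D. x $ k * z $ k))"
    by (subst sum.swap, simp add: sum_distrib_left)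
  also have "\<dots> = (\<Sum>x\<in>A. a x * (x \<bullet> z))"
    using z by (simp add: scalar_prod_def lessThan_atLeast0)
  also have "\<dots> = 0" using orth wA by (intro sum.neutral, auto)
  finally show ?thesis .
qed

lemma SymV_span_Es: "SymV D \<subseteq> V.span (Es D)"
proof
  fix z assume z: "z \<in> SymV D"
  define f where "f = (\<lambda>(a,b). ev D a b)"
  define a where "a = (\<lambda>w. z $ (case the_inv_into (Pr D) f w of (i,j) \<Rightarrow> i + j*D))"
  have Es: "Es D = f ` Pr D" unfolding Es_def f_def ..
  have inj: "inj_on f (Pr D)" unfolding f_def by (rule ev_inj)
  have Ec: "Es D \<subseteq> carrier_vec (D*D)" using Es_sub SymV_carrier by blast
  have finE: "finite (Es D)" unfolding Es using finite_Pr by simp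
  have "z = V.lincomb a (Es D)"
  proof (rule eq_vecI)
    have "z \<in> carrier_vec (D*D)" using z SymV_carrier by blast
    thus "dim_vec z = dim_vec (V.lincomb a (Es D))"
      using V.lincomb_dim[OF finE Ec] by simp
    fix k assume "k < dim_vec (V.lincomb a (Es D))"
    hence k: "k < D*D" using V.lincomb_dim[OF finE Ec] by simp
    define p where "p = (min (k mod D) (k div D), max (k mod D) (k div D))"
    have pP: "p \<in> Pr D" unfolding p_def by (rule minmax_Pr[OF k])
    have "V.lincomb a (Es D) $ k = (\<Sum>w\<in>Es D. a w * w $ k)" by (rule V.lincomb_index[OF k Ec])
    also have "\<dots> = (\<Sum>x\<in>Pr D. a (f x) * f x $ k)" unfolding Es by (rule sum.reindex[OF inj, unfolded comp_def])
    also have "\<dots> = (\<Sum>x\<in>Pr D. if x = p then a (f p) else 0)"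
    proof (intro sum.cong refl)
      fix x assume x: "x \<in> Pr D"
      obtain i j where xij: "x = (i,j)" by force
      show "a (f x) * f x $ k = (if x = p then a (f p) else 0)"
        using ev_index_Pr[of i j D k] x k unfolding xij f_def p_def by auto
    qed
    also have "\<dots> = a (f p)" using pP finite_Pr by simp
    also have "\<dots> = z $ (fst p + snd p * D)" unfolding a_def the_inv_into_f_f[OF inj pP]
      by (cases p, auto)
    also have "\<dots> = z $ k"
    proof -
      have km: "k mod D < D" "k div D < D" using idx_decomp[OF k] by auto
      have kk: "k mod D + k div D * D = k" by simp
      show ?thesis
      proof (cases "k mod D \<le> k div D")
        case True thus ?thesis unfolding p_def by (simp add: min_def max_def)
      next
        case False
        hence "fst p + snd p * D = k div D + k mod D * D" unfolding p_def by (simp add: min_def max_def)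
        also have "z $ (k div D + k mod D * D) = z $ (k mod D + k div D * D)"
          using SymV_entry[OF z km(2) km(1)] .
        finally show ?thesis unfolding kk .
      qed
    qed
    finally show "z $ k = V.lincomb a (Es D) $ k" by simp
  qed
  moreover have "a \<in> Es D \<rightarrow> carrier class_ring" by (simp add: class_ring_simps)
  ultimately show "z \<in> V.span (Es D)" unfolding V.span_def using finE by blast
qed

lemma Es_indpt: "V.lin_indpt (Es D)"
proof
  assume "V.lin_dep (Es D)"
  then obtain A a v where A: "finite A" "A \<subseteq> Es D" "V.lincomb a A = 0\<^sub>v (D*D)" "v \<in> A" "a v \<noteq> 0"
    unfolding V.lin_dep_def by (auto simp: class_ring_simps)
  have Ec: "A \<subseteq> carrier_vec (D*D)" using A Es_sub SymV_carrier by blast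
  obtain i0 j0 where v: "v = ev D i0 j0" "(i0,j0) \<in> Pr D" using A unfolding Es_def by auto
  have ij0: "i0 < D" "j0 < D" "i0 \<le> j0" using v(2) unfolding Pr_def by auto
  define k where "k = i0 + j0*D"
  have k: "k < D*D" unfolding k_def by (rule idx_lt[OF ij0(1,2)])
  have kmd: "k mod D = i0" "k div D = j0" unfolding k_def using ij0 by auto
  have "0 = V.lincomb a A $ k" using A(3) k by simp
  also have "\<dots> = (\<Sum>w\<in>A. a w * w $ k)" by (rule V.lincomb_index[OF k Ec])
  also have "\<dots> = (\<Sum>w\<in>A. if w = v then a v else 0)"
  proof (intro sum.cong refl)
    fix w assume w: "w \<in> A"
    then obtain i j where wij: "w = ev D i j" "(i,j) \<in> Pr D" using A unfolding Es_def by auto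
    show "a w * w $ k = (if w = v then a v else 0)"
      using ev_index_Pr[OF wij(2) k] ev_index_Pr[OF v(2) k] ij0 unfolding wij(1) v(1) kmd
      by (auto simp: min_def max_def)
  qed
  also have "\<dots> = a v" using A by simp
  finally show False using A(5) by simp
qed


lemma lincomb_dot:
  assumes A: "A \<subseteq> carrier_vec (D*D)" "finite A" and z: "z \<in> carrier_vec (D*D)"
  shows "V.lincomb a A \<bullet> z = (\<Sum>x\<in>A. a x * (x \<bullet> z))"
proof -
  have "V.lincomb a A \<bullet> z = (\<Sum>k<D*D. V.lincomb a A $ k * z $ k)" using z by (simp add: scalar_prod_def lessThan_atLeast0)
  also have "\<dots> = (\<Sum>k<D*D. (\<Sum>x\<in>A. a x * x $ k) * z $ k)"
    by (intro sum.cong refl, subst V.lincomb_index[OF _ A(1)], auto)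
  also have "\<dots> = (\<Sum>k<D*D. \<Sum>x\<in>A. a x * (x $ k * z $ k))"
    by (simp add: sum_distrib_right mult.assoc)
  also have "\<dots> = (\<Sum>x\<in>A. a x * (\<Sum>k<D*D. x $ k * z $ k))"
    by (subst sum.swap, simp add: sum_distrib_left)
  also have "\<dots> = (\<Sum>x\<in>A. a x * (x \<bullet> z))"
    using z by (simp add: scalar_prod_def lessThan_atLeast0)
  finally show ?thesis .
qed

lemma real_cscalar: "(v :: real vec) \<bullet>c w = v \<bullet> w"
proof -
  have "conjugate w = w" by (intro eq_vecI, auto)
  thus ?thesis by simp
qed

lemma proj_exists:
  assumes S: "S \<subseteq> carrier_vec (D*D)" "finite S" "V.lin_indpt S" and y: "y \<in> carrier_vec (D*D)"
  shows "\<exists>p \<in> V.span S. \<forall>s\<in>S. (y - p) \<bullet> s = 0"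
proof -
  obtain ws where ws: "set ws = S" "distinct ws" using finite_distinct_list[OF S(2)] by auto
  define us where "us = gram_schmidt (D*D) ws"
  note GS = V.gram_schmidt_result[of ws us, OF _ ws(2) _ us_def, unfolded ws(1), OF S(1) S(3)]
  define U where "U = set us"
  have U: "U \<subseteq> carrier_vec (D*D)" "finite U" unfolding U_def using GS by auto
  have spanU: "V.span S = V.span U" unfolding U_def using GS by auto
  have uu: "u \<bullet> u \<noteq> 0" if uU: "u \<in> U" for u
  proof -
    obtain i where i: "i < length us" "u = us ! i" using uU unfolding U_def by (auto simp: in_set_conv_nth)
    show ?thesis using corthogonalD[OF GS(2) i(1) i(1)] i by (simp add: real_cscalar)
  qed
  have uv: "u \<bullet> v = 0" if uvU: "u \<in> U" "v \<in> U" "u \<noteq> v" for u v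
  proof -
    obtain i where i: "i < length us" "u = us ! i" using uvU(1) unfolding U_def by (auto simp: in_set_conv_nth)
    obtain j where j: "j < length us" "v = us ! j" using uvU(2) unfolding U_def by (auto simp: in_set_conv_nth)
    have "i \<noteq> j" using i j uvU(3) by auto
    thus ?thesis using corthogonalD[OF GS(2) i(1) j(1)] i j by (simp add: real_cscalar)
  qed
  define c where "c = (\<lambda>u. (y \<bullet> u) / (u \<bullet> u))"
  define p where "p = V.lincomb c U"
  have pc: "p \<in> carrier_vec (D*D)" unfolding p_def
    by (intro carrier_vecI, rule V.lincomb_dim[OF U(2) U(1)])
  have "p \<in> V.span U" unfolding p_def V.span_def using U
    by (auto simp: class_ring_simps)
  hence pspan: "p \<in> V.span S" using spanU by simp
  have orthU: "\<forall>u\<in>U. u \<bullet> (y - p) = 0"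
  proof
    fix u assume u: "u \<in> U"
    have uc: "u \<in> carrier_vec (D*D)" using u U by auto
    have "p \<bullet> u = (\<Sum>x\<in>U. c x * (x \<bullet> u))" unfolding p_def by (rule lincomb_dot[OF U uc])
    also have "\<dots> = (\<Sum>x\<in>U. if x = u then c u * (u \<bullet> u) else 0)"
      by (intro sum.cong refl, insert uv u, auto)
    also have "\<dots> = c u * (u \<bullet> u)" using u U by simp
    also have "\<dots> = y \<bullet> u" unfolding c_def using uu[OF u] by simp
    finally have "p \<bullet> u = y \<bullet> u" .
    hence "(y - p) \<bullet> u = 0" using minus_scalar_prod_distrib[OF y pc uc] by simp
    thus "u \<bullet> (y - p) = 0" using comm_scalar_prod[OF uc, of "y - p"] y pc by simp
  qed
  have "\<forall>s\<in>S. (y - p) \<bullet> s = 0"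
  proof
    fix s assume s: "s \<in> S"
    have sc: "s \<in> carrier_vec (D*D)" using s S by auto
    have "s \<in> V.span U" unfolding spanU[symmetric] using V.in_own_span[OF S(1)] s by auto
    hence "s \<bullet> (y - p) = 0" using orth_span[OF U(1) _ orthU] y pc by simp
    thus "(y - p) \<bullet> s = 0" using comm_scalar_prod[OF sc, of "y - p"] y pc by simp
  qed
  thus ?thesis using pspan by auto
qed

lemma SymV_minus: "a \<in> SymV D \<Longrightarrow> b \<in> SymV D \<Longrightarrow> a - b \<in> SymV D"
proof -
  assume a: "a \<in> SymV D" and b: "b \<in> SymV D"
  have ac: "a \<in> carrier_vec (D*D)" and bc: "b \<in> carrier_vec (D*D)" using a b SymV_carrier by auto
  show ?thesis unfolding SymV_def
  proof (intro CollectI conjI allI impI)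
    show "a - b \<in> carrier_vec (D*D)" using ac bc by simp
    fix i j assume ij: "i < D" "j < D"
    show "(a - b) $ (i + j*D) = (a - b) $ (j + i*D)"
      using SymV_entry[OF a ij] SymV_entry[OF b ij] idx_lt[OF ij] idx_lt[OF ij(2,1)] ac bc by simp
  qed
qed

lemma indpt_card_bound:
  assumes T: "finite T" "T \<subseteq> SymV D" "V.lin_indpt T"
  shows "card T \<le> D * (D + 1) div 2"
proof -
  have Ec: "Es D \<subseteq> carrier_vec (D*D)" using Es_sub SymV_carrier by blast
  have finE: "finite (Es D)" unfolding Es_def using finite_Pr by simp
  have "T \<subseteq> V.span (Es D)" using T(2) SymV_span_Es by blast
  from V.replacement[OF T(1) finE Ec T(3) this]
  have "card T \<le> card (Es D)" by auto
  thus ?thesis unfolding card_Es .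
qed

lemma rank_crit:
  assumes vs: "set vs \<subseteq> SymV D"
  shows "vec_space.rank (D*D) (mat_of_cols (D*D) vs) = D * (D + 1) div 2 \<longleftrightarrow>
         (\<forall>z\<in>SymV D. (\<forall>v\<in>set vs. v \<bullet> z = 0) \<longrightarrow> z = 0\<^sub>v (D*D))"
proof -
  define N where "N = D * (D + 1) div 2"
  have vsc: "set vs \<subseteq> carrier_vec (D*D)" using vs SymV_carrier by blast
  define M where "M = mat_of_cols (D*D) vs"
  have Mc: "M \<in> carrier_mat (D*D) (length vs)" unfolding M_def by simp
  have colsM: "cols M = vs" unfolding M_def using vsc by (simp add: cols_mat_of_cols)
  have P0: "{} \<subseteq> set vs \<and> V.lin_indpt {}" unfolding V.lin_dep_def by auto
  obtain S where S: "finite S" "maximal S (\<lambda>T. T \<subseteq> set vs \<and> V.lin_indpt T)"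
    using maximal_exists_superset[of "set vs" "\<lambda>T. T \<subseteq> set vs \<and> V.lin_indpt T" "{}", OF _ _ P0] by auto
  have rk: "V.rank M = card S" using V.rank_card_indpt[OF Mc] S(2) unfolding colsM by auto
  have Ssub: "S \<subseteq> set vs" and Sind: "V.lin_indpt S" using S(2) unfolding maximal_def by auto
  have Sc: "S \<subseteq> carrier_vec (D*D)" using Ssub vsc by auto
  have SSym: "S \<subseteq> SymV D" using Ssub vs by auto
  have vs_span: "set vs \<subseteq> V.span S"
  proof
    fix v assume v: "v \<in> set vs"
    show "v \<in> V.span S"
    proof (cases "v \<in> S")
      case True thus ?thesis using V.in_own_span[OF Sc] by auto
    next
      case False
      have "\<not> (insert v S \<subseteq> set vs \<and> V.lin_indpt (insert v S))"
      proof
        assume "insert v S \<subseteq> set vs \<and> V.lin_indpt (insert v S)"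
        hence "insert v S = S" using S(2) unfolding maximal_def by blast
        thus False using False by auto
      qed
      hence "V.lin_dep (S \<union> {v})" using v Ssub by auto
      thus ?thesis using V.lin_dep_iff_in_span[OF Sc Sind _ False] v vsc by auto
    qed
  qed
  have bound: "card S \<le> N" unfolding N_def by (rule indpt_card_bound[OF S(1) SSym Sind])
  show ?thesis unfolding M_def[symmetric] rk N_def[symmetric]
  proof
    assume cS: "card S = N"
    show "\<forall>z\<in>SymV D. (\<forall>v\<in>set vs. v \<bullet> z = 0) \<longrightarrow> z = 0\<^sub>v (D*D)"
    proof (intro ballI impI, rule ccontr)
      fix z assume z: "z \<in> SymV D" and orth: "\<forall>v\<in>set vs. v \<bullet> z = 0" and nz: "z \<noteq> 0\<^sub>v (D*D)"
      have zc: "z \<in> carrier_vec (D*D)" using z SymV_carrier by auto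
      have zspan: "z \<notin> V.span S"
      proof
        assume "z \<in> V.span S"
        hence "z \<bullet> z = 0" using orth_span[OF Sc zc _] orth Ssub by auto
        hence "z \<bullet>c z = 0" by (simp add: real_cscalar)
        thus False using conjugate_square_eq_0_vec[OF zc] nz by simp
      qed
      have zS: "z \<notin> S" using zspan V.in_own_span[OF Sc] by auto
      have ind: "V.lin_indpt (S \<union> {z})" using V.lin_dep_iff_in_span[OF Sc Sind zc zS] zspan by simp
      have "card (S \<union> {z}) \<le> N" unfolding N_def
        by (rule indpt_card_bound, insert S(1) SSym z ind, auto)
      moreover have "card (S \<union> {z}) = N + 1" using S(1) zS cS by simp
      ultimately show False by simp
    qed
  next
    assume R: "\<forall>z\<in>SymV D. (\<forall>v\<in>set vs. v \<bullet> z = 0) \<longrightarrow> z = 0\<^sub>v (D*D)"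
    have Espan: "Es D \<subseteq> V.span S"
    proof
      fix e assume e: "e \<in> Es D"
      have eS: "e \<in> SymV D" using e Es_sub by auto
      have ec: "e \<in> carrier_vec (D*D)" using eS SymV_carrier by auto
      obtain p where p: "p \<in> V.span S" "\<forall>s\<in>S. (e - p) \<bullet> s = 0"
        using proj_exists[OF Sc S(1) Sind ec] by auto
      have pS: "p \<in> SymV D" using span_SymV[OF SSym] p(1) by auto
      have pc: "p \<in> carrier_vec (D*D)" using pS SymV_carrier by auto
      have wS: "e - p \<in> SymV D" by (rule SymV_minus[OF eS pS])
      have wc: "e - p \<in> carrier_vec (D*D)" using ec pc by simp
      have oS: "\<forall>t\<in>S. t \<bullet> (e - p) = 0"
      proof
        fix t assume t: "t \<in> S"
        have tc: "t \<in> carrier_vec (D*D)" using t Sc by auto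
        show "t \<bullet> (e - p) = 0" using p(2) t comm_scalar_prod[OF tc wc] by simp
      qed
      have "\<forall>v\<in>set vs. v \<bullet> (e - p) = 0"
        using orth_span[OF Sc wc oS] vs_span by auto
      hence "e - p = 0\<^sub>v (D*D)" using R wS by auto
      hence "e = p"
      proof -
        assume h: "e - p = 0\<^sub>v (D*D)"
        show "e = p"
        proof (rule eq_vecI)
          fix i assume i: "i < dim_vec p"
          have "(e - p) $ i = 0" using h i pc by simp
          thus "e $ i = p $ i" using i pc ec by simp
        qed (insert ec pc, simp)
      qed
      thus "e \<in> V.span S" using p(1) by simp
    qed
    have Ec: "Es D \<subseteq> carrier_vec (D*D)" using Es_sub SymV_carrier by blast
    have finE: "finite (Es D)" unfolding Es_def using finite_Pr by simp
    from V.replacement[OF finE S(1) Sc Es_indpt Espan]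
    have "card (Es D) \<le> card S" by auto
    thus "card S = N" using bound unfolding card_Es N_def by simp
  qed
qed

end



definition frob :: "nat \<Rightarrow> real mat \<Rightarrow> real mat \<Rightarrow> real" where
  "frob D X Y = (\<Sum>a<D. \<Sum>b<D. X $$ (a,b) * Y $$ (a,b))"
definition matz :: "nat \<Rightarrow> real vec \<Rightarrow> real mat" where
  "matz D z = mat D D (\<lambda>(a,b). z $ (a + b*D))"

lemma sum_split_blocks:
  fixes D m :: nat and g :: "nat \<Rightarrow> 'a :: comm_monoid_add"
  shows "(\<Sum>k<D*m. g k) = (\<Sum>b<m. \<Sum>a<D. g (a + b*D))"
proof (induction m)
  case 0 thus ?case by simp
next
  case (Suc m)
  have "{..<D * Suc m} = {..<D*m} \<union> {D*m..<D*m + D}" by auto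
  hence "(\<Sum>k<D*Suc m. g k) = (\<Sum>k<D*m. g k) + (\<Sum>k\<in>{D*m..<D*m+D}. g k)"
    by (simp add: sum.union_disjoint ivl_disj_int)
  also have "(\<Sum>k\<in>{D*m..<D*m+D}. g k) = (\<Sum>a<D. g (a + m*D))"
  proof -
    have "(\<Sum>k\<in>{D*m..<D*m+D}. g k) = (\<Sum>k\<in>{0 + D*m..<D + D*m}. g k)" by (simp add: add.commute)
    also have "\<dots> = (\<Sum>a\<in>{0..<D}. g (a + D*m))" by (rule sum.shift_bounds_nat_ivl)
    finally show ?thesis by (simp add: lessThan_atLeast0 mult.commute)
  qed
  finally show ?case using Suc by simp
qed

lemma vectorize_carrier: "X \<in> carrier_mat D D \<Longrightarrow> vectorize X \<in> carrier_vec (D*D)"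
  unfolding vectorize_def by auto

lemma vectorize_index: "X \<in> carrier_mat D D \<Longrightarrow> a < D \<Longrightarrow> b < D \<Longrightarrow> vectorize X $ (a + b*D) = X $$ (a,b)"
  unfolding vectorize_def using idx_lt[of a D b] by auto

lemma vectorize_SymV:
  assumes X: "X \<in> carrier_mat D D" and sym: "transpose_mat X = X"
  shows "vectorize X \<in> SymV D"
  unfolding SymV_def
proof (intro CollectI conjI allI impI)
  show "vectorize X \<in> carrier_vec (D*D)" by (rule vectorize_carrier[OF X])
  fix a b assume ab: "a < D" "b < D"
  have "X $$ (a,b) = transpose_mat X $$ (a,b)" using sym by simp
  also have "\<dots> = X $$ (b,a)" using X ab by simp
  finally show "vectorize X $ (a + b*D) = vectorize X $ (b + a*D)"
    using vectorize_index[OF X ab] vectorize_index[OF X ab(2,1)] by simp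
qed

lemma matz_carrier: "matz D z \<in> carrier_mat D D" unfolding matz_def by simp

lemma vectorize_matz: "z \<in> carrier_vec (D*D) \<Longrightarrow> vectorize (matz D z) = z"
proof -
  assume z: "z \<in> carrier_vec (D*D)"
  show ?thesis
  proof (rule eq_vecI)
    show "dim_vec (vectorize (matz D z)) = dim_vec z" using z unfolding vectorize_def matz_def by simp
    fix k assume "k < dim_vec z"
    hence k: "k < D*D" using z by simp
    note kd = idx_decomp[OF k]
    have "vectorize (matz D z) $ k = matz D z $$ (k mod D, k div D)"
      unfolding vectorize_def matz_def using k by simp
    also have "\<dots> = z $ (k mod D + k div D * D)" unfolding matz_def using kd(2,3) by simp
    also have "k mod D + k div D * D = k" by simp
    finally show "vectorize (matz D z) $ k = z $ k" .
  qed
qed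

lemma matz_vectorize: "X \<in> carrier_mat D D \<Longrightarrow> matz D (vectorize X) = X"
proof -
  assume X: "X \<in> carrier_mat D D"
  show ?thesis
    by (rule eq_matI, insert X, auto simp: matz_def vectorize_index)
qed

lemma matz_sym: "z \<in> SymV D \<Longrightarrow> transpose_mat (matz D z) = matz D z"
proof -
  assume z: "z \<in> SymV D"
  show ?thesis
  proof (rule eq_matI)
    fix a b assume "a < dim_row (matz D z)" "b < dim_col (matz D z)"
    hence ab: "a < D" "b < D" unfolding matz_def by auto
    show "transpose_mat (matz D z) $$ (a,b) = matz D z $$ (a,b)"
      using ab SymV_entry[OF z ab(2,1)] unfolding matz_def by simp
  qed (auto simp: matz_def)
qed

lemma dot_vectorize:
  assumes X: "X \<in> carrier_mat D D" and Y: "Y \<in> carrier_mat D D"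
  shows "vectorize X \<bullet> vectorize Y = frob D X Y"
proof -
  have "vectorize X \<bullet> vectorize Y = (\<Sum>k<D*D. vectorize X $ k * vectorize Y $ k)"
    using vectorize_carrier[OF Y] by (simp add: scalar_prod_def lessThan_atLeast0)
  also have "\<dots> = (\<Sum>b<D. \<Sum>a<D. vectorize X $ (a + b*D) * vectorize Y $ (a + b*D))"
    by (rule sum_split_blocks)
  also have "\<dots> = (\<Sum>b<D. \<Sum>a<D. X $$ (a,b) * Y $$ (a,b))"
    by (intro sum.cong refl, simp add: vectorize_index[OF X] vectorize_index[OF Y])
  also have "\<dots> = frob D X Y" unfolding frob_def by (rule sum.swap)
  finally show ?thesis .
qed

lemma frob_congr:
  assumes R: "R \<in> carrier_mat D D" and B: "B \<in> carrier_mat D D" and Z: "Z \<in> carrier_mat D D"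
  shows "frob D (R * B * transpose_mat R) Z = frob D B (transpose_mat R * Z * R)"
proof -
  have RT: "transpose_mat R \<in> carrier_mat D D" using R by simp
  have "frob D (R * B * transpose_mat R) Z =
        (\<Sum>a<D. \<Sum>b<D. (\<Sum>d<D. (\<Sum>c<D. R $$ (a,c) * B $$ (c,d)) * R $$ (b,d)) * Z $$ (a,b))"
    unfolding frob_def using R B by (intro sum.cong refl, subst triple_index[OF R B RT], auto)
  also have "\<dots> = (\<Sum>a<D. \<Sum>b<D. \<Sum>d<D. \<Sum>c<D. B $$ (c,d) * (R $$ (a,c) * Z $$ (a,b) * R $$ (b,d)))"
    by (simp add: sum_distrib_right sum_distrib_left mult_ac)
  also have "\<dots> = (\<Sum>a<D. \<Sum>d<D. \<Sum>b<D. \<Sum>c<D. B $$ (c,d) * (R $$ (a,c) * Z $$ (a,b) * R $$ (b,d)))"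
    by (rule sum.cong[OF refl], rule sum.swap)
  also have "\<dots> = (\<Sum>d<D. \<Sum>a<D. \<Sum>b<D. \<Sum>c<D. B $$ (c,d) * (R $$ (a,c) * Z $$ (a,b) * R $$ (b,d)))"
    by (rule sum.swap)
  also have "\<dots> = (\<Sum>d<D. \<Sum>a<D. \<Sum>c<D. \<Sum>b<D. B $$ (c,d) * (R $$ (a,c) * Z $$ (a,b) * R $$ (b,d)))"
    by (rule sum.cong[OF refl], rule sum.cong[OF refl], rule sum.swap)
  also have "\<dots> = (\<Sum>d<D. \<Sum>c<D. \<Sum>a<D. \<Sum>b<D. B $$ (c,d) * (R $$ (a,c) * Z $$ (a,b) * R $$ (b,d)))"
    by (rule sum.cong[OF refl], rule sum.swap)
  also have "\<dots> = (\<Sum>c<D. \<Sum>d<D. \<Sum>a<D. \<Sum>b<D. B $$ (c,d) * (R $$ (a,c) * Z $$ (a,b) * R $$ (b,d)))"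
    by (rule sum.swap)
  also have "\<dots> = (\<Sum>c<D. \<Sum>d<D. B $$ (c,d) * (\<Sum>b<D. \<Sum>a<D. R $$ (a,c) * Z $$ (a,b) * R $$ (b,d)))"
    by (rule sum.cong[OF refl], rule sum.cong[OF refl], simp add: sum_distrib_left, rule sum.swap)
  also have "\<dots> = (\<Sum>c<D. \<Sum>d<D. B $$ (c,d) * (\<Sum>b<D. (\<Sum>a<D. transpose_mat R $$ (c,a) * Z $$ (a,b)) * R $$ (b,d)))"
    using R by (intro sum.cong refl, simp add: sum_distrib_right)
  also have "\<dots> = frob D B (transpose_mat R * Z * R)"
    unfolding frob_def using R Z by (intro sum.cong refl, subst triple_index[OF RT Z R], auto)
  finally show ?thesis .
qed

lemma frob_outer:
  assumes u: "u \<in> carrier_vec D" and v: "v \<in> carrier_vec D" and X: "X \<in> carrier_mat D D"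
  shows "frob D (outer u v) X = u \<bullet> (X *\<^sub>v v)"
proof -
  have "frob D (outer u v) X = (\<Sum>a<D. \<Sum>b<D. u $ a * v $ b * X $$ (a,b))"
    unfolding frob_def outer_def using u v by (intro sum.cong refl, auto)
  also have "\<dots> = (\<Sum>a<D. u $ a * (\<Sum>b<D. X $$ (a,b) * v $ b))"
    by (simp add: sum_distrib_left mult_ac)
  also have "\<dots> = u \<bullet> (X *\<^sub>v v)"
    using u v X by (simp add: scalar_prod_def lessThan_atLeast0 mult_mat_vec_def row_def)
  finally show ?thesis .
qed

lemma outer_carrier: "u \<in> carrier_vec D \<Longrightarrow> v \<in> carrier_vec D \<Longrightarrow> outer u v \<in> carrier_mat D D"
  unfolding outer_def by auto

lemma frob_outer_swap:
  assumes u: "u \<in> carrier_vec D" and v: "v \<in> carrier_vec D" and X: "X \<in> carrier_mat D D"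
    and sym: "transpose_mat X = X"
  shows "frob D (outer v u) X = frob D (outer u v) X"
proof -
  have Xs: "X $$ (a,b) = X $$ (b,a)" if "a < D" "b < D" for a b
  proof -
    have "X $$ (a,b) = transpose_mat X $$ (a,b)" using sym by simp
    also have "\<dots> = X $$ (b,a)" using X that by simp
    finally show ?thesis .
  qed
  have "frob D (outer v u) X = (\<Sum>a<D. \<Sum>b<D. v $ a * u $ b * X $$ (a,b))"
    unfolding frob_def outer_def using u v by (intro sum.cong refl, auto)
  also have "\<dots> = (\<Sum>b<D. \<Sum>a<D. v $ a * u $ b * X $$ (a,b))" by (rule sum.swap)
  also have "\<dots> = (\<Sum>b<D. \<Sum>a<D. u $ b * v $ a * X $$ (b,a))"
    by (intro sum.cong refl, simp add: Xs)
  also have "\<dots> = frob D (outer u v) X"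
    unfolding frob_def outer_def using u v by (intro sum.cong refl, auto)
  finally show ?thesis .
qed

lemma frob_B:
  assumes u: "u \<in> carrier_vec D" and v: "v \<in> carrier_vec D" and X: "X \<in> carrier_mat D D"
    and sym: "transpose_mat X = X"
  shows "frob D ((1/2::real) \<cdot>\<^sub>m (outer u v + outer v u)) X = u \<bullet> (X *\<^sub>v v)"
proof -
  have "frob D ((1/2::real) \<cdot>\<^sub>m (outer u v + outer v u)) X = (1/2) * (frob D (outer u v) X + frob D (outer v u) X)"
    unfolding frob_def using outer_carrier[OF u v] outer_carrier[OF v u]
    by (simp add: sum_distrib_left sum.distrib algebra_simps)
  also have "\<dots> = u \<bullet> (X *\<^sub>v v)" using frob_outer_swap[OF u v X sym] frob_outer[OF u v X] by simp
  finally show ?thesis .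
qed



lemma cancel_congr:
  assumes A: "(A::real mat) \<in> carrier_mat n n" and B: "B \<in> carrier_mat n n" and X: "X \<in> carrier_mat n n"
    and BA: "B * A = 1\<^sub>m n"
  shows "transpose_mat A * (transpose_mat B * X * B) * A = X"
proof -
  have AT: "transpose_mat A \<in> carrier_mat n n" and BT: "transpose_mat B \<in> carrier_mat n n" using A B by auto
  have TT: "transpose_mat A * transpose_mat B = 1\<^sub>m n"
    using transpose_mult[OF B A] BA by simp
  have BX: "transpose_mat B * X \<in> carrier_mat n n" using BT X by simp
  have BXB: "transpose_mat B * X * B \<in> carrier_mat n n" using BX B by simp
  have "transpose_mat A * (transpose_mat B * X * B) * A = transpose_mat A * (transpose_mat B * X * B * A)"
    by (rule assoc_mult_mat[OF AT BXB A])
  also have "transpose_mat B * X * B * A = transpose_mat B * X * (B * A)"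
    by (rule assoc_mult_mat[OF BX B A])
  also have "\<dots> = transpose_mat B * X" using BA right_mult_one_mat[OF BX] by simp
  also have "transpose_mat A * (transpose_mat B * X) = (transpose_mat A * transpose_mat B) * X"
    by (rule assoc_mult_mat[OF AT BT X, symmetric])
  also have "\<dots> = X" using TT left_mult_one_mat[OF X] by simp
  finally show ?thesis .
qed

lemma gram_entry0:
  assumes X: "X \<in> carrier_mat n m" and a: "a < m" and b: "b < m"
  shows "(transpose_mat X * X) $$ (a,b) = col X a \<bullet> col X b"
  using X a b by simp

lemma gram_entry:
  assumes C: "(C::real mat) \<in> carrier_mat n n" and P: "P \<in> carrier_mat n m" and a: "a < m" and b: "b < m"
  shows "(transpose_mat (C * P) * (C * P)) $$ (a,b) = col P a \<bullet> ((transpose_mat C * C) *\<^sub>v col P b)"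
proof -
  have pa: "col P a \<in> carrier_vec n" and pb: "col P b \<in> carrier_vec n" using P a b by auto
  have CP: "C * P \<in> carrier_mat n m" using C P by simp
  have "(transpose_mat (C * P) * (C * P)) $$ (a,b) = col (C * P) a \<bullet> col (C * P) b"
    by (rule gram_entry0[OF CP a b])
  also have "\<dots> = (C *\<^sub>v col P a) \<bullet> (C *\<^sub>v col P b)" by (simp only: col_mult2[OF C P a] col_mult2[OF C P b])
  also have "\<dots> = (C *\<^sub>v col P b) \<bullet> (C *\<^sub>v col P a)"
    by (rule comm_scalar_prod[of _ n], insert C pa pb, auto)
  also have "\<dots> = (transpose_mat C *\<^sub>v (C *\<^sub>v col P b)) \<bullet> col P a"
    by (rule transpose_vec_mult_scalar[OF C pa, symmetric], insert C pb, auto)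
  also have "\<dots> = col P a \<bullet> (transpose_mat C *\<^sub>v (C *\<^sub>v col P b))"
    by (rule comm_scalar_prod[of _ n], insert C pa pb, auto)
  also have "transpose_mat C *\<^sub>v (C *\<^sub>v col P b) = (transpose_mat C * C) *\<^sub>v col P b"
    by (rule assoc_mult_mat_vec[symmetric], insert C pb, auto)
  finally show ?thesis .
qed

definition Gm :: "sharp \<Rightarrow> real mat \<Rightarrow> real mat" where
  "Gm s A = sel s (inv_mat A * transpose_mat (inv_mat A)) (transpose_mat A * A)"
definition Cm :: "sharp \<Rightarrow> real mat \<Rightarrow> real mat" where
  "Cm s A = sel s (transpose_mat (inv_mat A)) A"

lemma Cm_props:
  assumes A: "A \<in> carrier_mat n n" "invertible_mat A"
  shows "Cm s A \<in> carrier_mat n n" "det (Cm s A) \<noteq> 0" "Gm s A = transpose_mat (Cm s A) * Cm s A"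
proof -
  note P = inv_mat_props[OF A]
  have di: "det (inv_mat A) \<noteq> 0" using det_mult[OF A(1) P(1)] P(2) by auto
  show "Cm s A \<in> carrier_mat n n" using A P by (cases s, auto simp: Cm_def)
  show "det (Cm s A) \<noteq> 0" using invertible_det[OF A] di det_transpose[OF P(1)] by (cases s, auto simp: Cm_def)
  show "Gm s A = transpose_mat (Cm s A) * Cm s A" by (cases s, auto simp: Cm_def Gm_def)
qed

lemma Gm_carrier: "A \<in> carrier_mat n n \<Longrightarrow> invertible_mat A \<Longrightarrow> Gm s A \<in> carrier_mat n n"
  using Cm_props(1,3)[of A n s] by simp

lemma gram_sym: "(C::real mat) \<in> carrier_mat n n \<Longrightarrow> transpose_mat (transpose_mat C * C) = transpose_mat C * C"
  by (subst transpose_mult[of _ n n _ n], auto)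

lemma Gm_sym: "A \<in> carrier_mat n n \<Longrightarrow> invertible_mat A \<Longrightarrow> transpose_mat (Gm s A) = Gm s A"
  using Cm_props[of A n s] gram_sym[of "Cm s A" n] by simp

lemma St_inverse:
  assumes A: "A \<in> carrier_mat n n" "invertible_mat A"
  shows "(transpose_mat A * A) * (inv_mat A * transpose_mat (inv_mat A)) = 1\<^sub>m n"
proof -
  note P = inv_mat_props[OF A]
  have AT: "transpose_mat A \<in> carrier_mat n n" and IT: "transpose_mat (inv_mat A) \<in> carrier_mat n n" using A P by auto
  have "(transpose_mat A * A) * (inv_mat A * transpose_mat (inv_mat A)) = transpose_mat A * (A * (inv_mat A * transpose_mat (inv_mat A)))"
    by (rule assoc_mult_mat[OF AT A(1)], insert P IT, auto)
  also have "A * (inv_mat A * transpose_mat (inv_mat A)) = (A * inv_mat A) * transpose_mat (inv_mat A)"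
    by (rule assoc_mult_mat[OF A(1) P(1) IT, symmetric])
  also have "\<dots> = transpose_mat (inv_mat A)" using P(2) left_mult_one_mat[OF IT] by simp
  also have "transpose_mat A * transpose_mat (inv_mat A) = 1\<^sub>m n" by (rule transpose_inv(1)[OF A])
  finally show ?thesis .
qed

lemma Gm_eq_iff:
  assumes A: "A \<in> carrier_mat n n" "invertible_mat A" and A': "A' \<in> carrier_mat n n" "invertible_mat A'"
  shows "Gm s A' = Gm s A \<longleftrightarrow> transpose_mat A' * A' = transpose_mat A * A"
proof (cases s)
  case Mm thus ?thesis by (simp add: Gm_def)
next
  case St
  have key: "Gm St X = inv_mat (transpose_mat X * X) \<and> transpose_mat X * X = inv_mat (Gm St X)"
    if X: "X \<in> carrier_mat n n" "invertible_mat X" for X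
  proof -
    have S: "transpose_mat X * X \<in> carrier_mat n n" using X by simp
    have G: "Gm St X \<in> carrier_mat n n" using Gm_carrier[OF X] .
    have SG: "(transpose_mat X * X) * Gm St X = 1\<^sub>m n" unfolding Gm_def using St_inverse[OF X] by simp
    have GS: "Gm St X * (transpose_mat X * X) = 1\<^sub>m n" by (rule mat_mult_left_right_inverse[OF S G SG])
    show ?thesis using inv_mat_eq[OF S G SG] inv_mat_eq[OF G S GS] by simp
  qed
  show ?thesis unfolding St using key[OF A] key[OF A'] by metis
qed

lemma Gm_realize:
  assumes W: "(W::real mat) \<in> carrier_mat n n" and dW: "det W \<noteq> 0"
  shows "\<exists>A'. A' \<in> carrier_mat n n \<and> invertible_mat A' \<and> Gm s A' = transpose_mat W * W"
proof -
  obtain Wi where Wi: "Wi \<in> carrier_mat n n" "W * Wi = 1\<^sub>m n" "Wi * W = 1\<^sub>m n"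
    using det_inverse_exists[OF W dW] by auto
  show ?thesis
  proof (cases s)
    case Mm
    thus ?thesis using W invertible_matI[OF W Wi(1,2)] by (intro exI[of _ W], simp add: Gm_def)
  next
    case St
    define A' where "A' = transpose_mat Wi"
    have A'c: "A' \<in> carrier_mat n n" unfolding A'_def using Wi by simp
    have WT: "transpose_mat W \<in> carrier_mat n n" using W by simp
    have "A' * transpose_mat W = transpose_mat (W * Wi)" unfolding A'_def by (rule transpose_mult[OF W Wi(1), symmetric])
    hence AW: "A' * transpose_mat W = 1\<^sub>m n" using Wi by simp
    have inv: "invertible_mat A'" by (rule invertible_matI[OF A'c WT AW])
    have "inv_mat A' = transpose_mat W" by (rule inv_mat_eq[OF A'c WT AW])
    thus ?thesis using A'c inv St by (intro exI[of _ A'], simp add: Gm_def)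
  qed
qed


lemma compat_iff:
  assumes P0: "P0st \<in> carrier_mat D W" "P0m \<in> carrier_mat D M" "transpose_mat P0st * P0m = Dm"
    and theta: "\<forall>j<J. fst (\<theta> j) < sel s W M \<and> snd (\<theta> j) < sel s W M"
    and A': "A' \<in> carrier_mat D D" "invertible_mat A'"
  shows "compatible D W M Dm s J \<theta> c (transpose_mat (inv_mat A') * P0st) (A' * P0m) \<longleftrightarrow>
         (\<forall>j<J. col (sel s P0st P0m) (fst (\<theta> j)) \<bullet> (Gm s A' *\<^sub>v col (sel s P0st P0m) (snd (\<theta> j))) = c j)"
proof -
  note Pi = inv_mat_props[OF A']
  have IT: "transpose_mat (inv_mat A') \<in> carrier_mat D D" using Pi by simp
  have c1: "transpose_mat (inv_mat A') * P0st \<in> carrier_mat D W" using IT P0 by simp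
  have c2: "A' * P0m \<in> carrier_mat D M" using A' P0 by simp
  have PT: "transpose_mat P0st \<in> carrier_mat W D" using P0 by simp
  have AP: "A' * P0m \<in> carrier_mat D M" using A' P0 by simp
  have "transpose_mat (transpose_mat (inv_mat A') * P0st) = transpose_mat P0st * inv_mat A'"
    using transpose_mult[OF IT P0(1)] by simp
  hence "transpose_mat (transpose_mat (inv_mat A') * P0st) * (A' * P0m) = transpose_mat P0st * inv_mat A' * (A' * P0m)"
    by simp
  also have "\<dots> = transpose_mat P0st * (inv_mat A' * (A' * P0m))"
    by (rule assoc_mult_mat[OF PT Pi(1) AP])
  also have "inv_mat A' * (A' * P0m) = (inv_mat A' * A') * P0m"
    by (rule assoc_mult_mat[OF Pi(1) A'(1) P0(2), symmetric])
  also have "\<dots> = P0m" using Pi(3) left_mult_one_mat[OF P0(2)] by simp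
  finally have prod: "transpose_mat (transpose_mat (inv_mat A') * P0st) * (A' * P0m) = Dm" using P0(3) by simp
  have P0s: "sel s P0st P0m \<in> carrier_mat D (sel s W M)" using P0 by (cases s, auto)
  have selP: "sel s (transpose_mat (inv_mat A') * P0st) (A' * P0m) = Cm s A' * sel s P0st P0m"
    by (cases s, auto simp: Cm_def)
  have entry: "(transpose_mat (sel s (transpose_mat (inv_mat A') * P0st) (A' * P0m)) *
                sel s (transpose_mat (inv_mat A') * P0st) (A' * P0m)) $$ \<theta> j =
               col (sel s P0st P0m) (fst (\<theta> j)) \<bullet> (Gm s A' *\<^sub>v col (sel s P0st P0m) (snd (\<theta> j)))"
    if j: "j < J" for j
  proof -
    have th: "\<theta> j = (fst (\<theta> j), snd (\<theta> j))" by simp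
    show ?thesis unfolding selP Cm_props(3)[OF A', of s]
      by (subst th, rule gram_entry[OF Cm_props(1)[OF A'] P0s], insert theta j, auto)
  qed
  show ?thesis unfolding compatible_def using c1 c2 prod entry by auto
qed

lemma submatrix_carrier:
  assumes A: "A \<in> carrier_mat n W" and I: "I \<subseteq> {..<W}" "card I = n"
  shows "submatrix A UNIV I \<in> carrier_mat n n"
proof -
  have "{i. i < n \<and> i \<in> (UNIV::nat set)} = {..<n}" by auto
  moreover have "{j. j < W \<and> j \<in> I} = I" using I by auto
  ultimately show ?thesis using A I unfolding submatrix_def by auto
qed

lemma submatrix_prod:
  assumes A: "A \<in> carrier_mat n W" and B: "B \<in> carrier_mat n M"
    and I: "I \<subseteq> {..<W}" "card I = n" and L: "L \<subseteq> {..<M}" "card L = n"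
  shows "transpose_mat (submatrix A UNIV I) * submatrix B UNIV L = submatrix (transpose_mat A * B) I L"
proof -
  have cI: "{j. j < W \<and> j \<in> I} = I" using I by auto
  have cL: "{j. j < M \<and> j \<in> L} = L" using L by auto
  have cU: "{i. i < n \<and> i \<in> (UNIV::nat set)} = {..<n}" by auto
  have RA: "submatrix A UNIV I \<in> carrier_mat n n" by (rule submatrix_carrier[OF A I])
  have RB: "submatrix B UNIV L \<in> carrier_mat n n" by (rule submatrix_carrier[OF B L])
  show ?thesis
  proof (rule eq_matI)
    fix i j assume ij: "i < dim_row (submatrix (transpose_mat A * B) I L)" "j < dim_col (submatrix (transpose_mat A * B) I L)"
    have ij': "i < n" "j < n" using ij A B cI cL I L unfolding submatrix_def by auto
    have pI: "pick I i \<in> I" using pick_in_set_le[of i I] ij' I by auto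
    have pL: "pick L j \<in> L" using pick_in_set_le[of j L] ij' L by auto
    have pIW: "pick I i < W" using pI I by auto
    have pLM: "pick L j < M" using pL L by auto
    have "(transpose_mat (submatrix A UNIV I) * submatrix B UNIV L) $$ (i,j) =
          (\<Sum>k<n. submatrix A UNIV I $$ (k,i) * submatrix B UNIV L $$ (k,j))"
      using RA RB ij' by (simp add: scalar_prod_def lessThan_atLeast0)
    also have "\<dots> = (\<Sum>k<n. A $$ (k, pick I i) * B $$ (k, pick L j))"
      using A B ij' I L cI cL cU by (intro sum.cong refl, simp add: submatrix_def pick_UNIV)
    also have "\<dots> = (transpose_mat A * B) $$ (pick I i, pick L j)"
      using A B pIW pLM by (simp add: scalar_prod_def lessThan_atLeast0)
    also have "\<dots> = submatrix (transpose_mat A * B) I L $$ (i,j)"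
      using A B ij' cI cL I L by (simp add: submatrix_def)
    finally show "(transpose_mat (submatrix A UNIV I) * submatrix B UNIV L) $$ (i,j) = submatrix (transpose_mat A * B) I L $$ (i,j)" .
  qed (insert RA RB A B cI cL I L, auto simp: submatrix_def)
qed


lemma q_minus:
  assumes u: "u \<in> carrier_vec n" and v: "v \<in> carrier_vec n" and X: "(X::real mat) \<in> carrier_mat n n" and Y: "Y \<in> carrier_mat n n"
  shows "u \<bullet> ((X - Y) *\<^sub>v v) = u \<bullet> (X *\<^sub>v v) - u \<bullet> (Y *\<^sub>v v)"
  using X Y u v by (simp add: minus_mult_distrib_mat_vec[OF X Y v] scalar_prod_minus_distrib[OF u])

lemma q_add_smult:
  assumes u: "u \<in> carrier_vec n" and v: "v \<in> carrier_vec n" and X: "(X::real mat) \<in> carrier_mat n n" and Y: "Y \<in> carrier_mat n n"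
  shows "u \<bullet> ((X + e \<cdot>\<^sub>m Y) *\<^sub>v v) = u \<bullet> (X *\<^sub>v v) + e * (u \<bullet> (Y *\<^sub>v v))"
proof -
  have "(X + e \<cdot>\<^sub>m Y) *\<^sub>v v = X *\<^sub>v v + (e \<cdot>\<^sub>m Y) *\<^sub>v v"
    by (rule add_mult_distrib_mat_vec, insert X Y v, auto)
  also have "(e \<cdot>\<^sub>m Y) *\<^sub>v v = e \<cdot>\<^sub>v (Y *\<^sub>v v)"
    by (rule eq_vecI, insert Y v, auto simp: scalar_prod_def sum_distrib_left mult.assoc)
  finally have "(X + e \<cdot>\<^sub>m Y) *\<^sub>v v = X *\<^sub>v v + e \<cdot>\<^sub>v (Y *\<^sub>v v)" .
  thus ?thesis using u v X Y by (simp add: scalar_prod_add_distrib[OF u])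
qed

lemma congr_sym:
  assumes A: "(A::real mat) \<in> carrier_mat n n" and Z: "Z \<in> carrier_mat n n" and sym: "transpose_mat Z = Z"
  shows "transpose_mat (transpose_mat A * Z * A) = transpose_mat A * Z * A"
proof -
  have AT: "transpose_mat A \<in> carrier_mat n n" using A by simp
  have AZ: "transpose_mat A * Z \<in> carrier_mat n n" using AT Z by simp
  have "transpose_mat (transpose_mat A * Z * A) = transpose_mat A * transpose_mat (transpose_mat A * Z)"
    by (rule transpose_mult[OF AZ A])
  also have "transpose_mat (transpose_mat A * Z) = transpose_mat Z * transpose_mat (transpose_mat A)"
    by (rule transpose_mult[OF AT Z])
  also have "\<dots> = Z * A" using sym by simp
  also have "transpose_mat A * (Z * A) = transpose_mat A * Z * A"
    by (rule assoc_mult_mat[OF AT Z A, symmetric])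
  finally show ?thesis .
qed

lemma congr_algebra:
  assumes C0: "(C0::real mat) \<in> carrier_mat n n" and Ci: "Ci \<in> carrier_mat n n" and Vm: "Vm \<in> carrier_mat n n"
    and X: "X \<in> carrier_mat n n" and CiC0: "Ci * C0 = 1\<^sub>m n"
    and VV: "transpose_mat Vm * Vm = 1\<^sub>m n + e \<cdot>\<^sub>m (transpose_mat Ci * X * Ci)"
  shows "transpose_mat (Vm * C0) * (Vm * C0) = transpose_mat C0 * C0 + e \<cdot>\<^sub>m X"
proof -
  define Y where "Y = transpose_mat Ci * X * Ci"
  have Yc: "Y \<in> carrier_mat n n" unfolding Y_def using Ci X by simp
  have C0T: "transpose_mat C0 \<in> carrier_mat n n" and VT: "transpose_mat Vm \<in> carrier_mat n n" using C0 Vm by auto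
  have VC: "Vm * C0 \<in> carrier_mat n n" using Vm C0 by simp
  have YC: "Y * C0 \<in> carrier_mat n n" using Yc C0 by simp
  have "transpose_mat (Vm * C0) * (Vm * C0) = transpose_mat C0 * transpose_mat Vm * (Vm * C0)"
    using transpose_mult[OF Vm C0] by simp
  also have "\<dots> = transpose_mat C0 * (transpose_mat Vm * (Vm * C0))"
    by (rule assoc_mult_mat[OF C0T VT VC])
  also have "transpose_mat Vm * (Vm * C0) = (transpose_mat Vm * Vm) * C0"
    by (rule assoc_mult_mat[OF VT Vm C0, symmetric])
  also have "\<dots> = (1\<^sub>m n + e \<cdot>\<^sub>m Y) * C0" unfolding VV Y_def ..
  also have "\<dots> = 1\<^sub>m n * C0 + (e \<cdot>\<^sub>m Y) * C0"
    by (rule add_mult_distrib_mat, insert Yc C0, auto)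
  also have "\<dots> = C0 + e \<cdot>\<^sub>m (Y * C0)"
    using left_mult_one_mat[OF C0] mult_smult_assoc_mat[OF Yc C0] by simp
  also have "transpose_mat C0 * (C0 + e \<cdot>\<^sub>m (Y * C0)) = transpose_mat C0 * C0 + transpose_mat C0 * (e \<cdot>\<^sub>m (Y * C0))"
    by (rule mult_add_distrib_mat, insert C0T C0 YC, auto)
  also have "transpose_mat C0 * (e \<cdot>\<^sub>m (Y * C0)) = e \<cdot>\<^sub>m (transpose_mat C0 * (Y * C0))"
    by (rule mult_smult_distrib[OF C0T YC])
  also have "transpose_mat C0 * (Y * C0) = transpose_mat C0 * Y * C0"
    by (rule assoc_mult_mat[OF C0T Yc C0, symmetric])
  also have "\<dots> = X" unfolding Y_def by (rule cancel_congr[OF C0 Ci X CiC0])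
  finally show ?thesis .
qed

lemma transpose_smult_add_one:
  assumes Y: "(Y::real mat) \<in> carrier_mat n n" and sym: "transpose_mat Y = Y"
  shows "transpose_mat (1\<^sub>m n + e \<cdot>\<^sub>m Y) = 1\<^sub>m n + e \<cdot>\<^sub>m Y"
proof (rule eq_matI)
  fix i j assume "i < dim_row (1\<^sub>m n + e \<cdot>\<^sub>m Y)" "j < dim_col (1\<^sub>m n + e \<cdot>\<^sub>m Y)"
  hence ij: "i < n" "j < n" using Y by auto
  have "Y $$ (j,i) = Y $$ (i,j)"
  proof -
    have "Y $$ (j,i) = transpose_mat Y $$ (i,j)" using Y ij by simp
    thus ?thesis using sym by simp
  qed
  thus "transpose_mat (1\<^sub>m n + e \<cdot>\<^sub>m Y) $$ (i,j) = (1\<^sub>m n + e \<cdot>\<^sub>m Y) $$ (i,j)"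
    using Y ij by auto
qed (insert Y, auto)

lemma mat_minus_zero_eq:
  assumes X: "(X::real mat) \<in> carrier_mat n n" and Y: "Y \<in> carrier_mat n n" and Z: "X - Y = 0\<^sub>m n n"
  shows "X = Y"
proof (rule eq_matI)
  fix i j assume "i < dim_row Y" "j < dim_col Y"
  hence ij: "i < n" "j < n" using Y by auto
  have "(X - Y) $$ (i,j) = 0" using Z ij by simp
  thus "X $$ (i,j) = Y $$ (i,j)" using X Y ij by simp
qed (insert X Y, auto)

lemma smult_zero_mat:
  assumes X: "(X::real mat) \<in> carrier_mat n n" and Z: "e \<cdot>\<^sub>m X = 0\<^sub>m n n" and e: "e \<noteq> 0"
  shows "X = 0\<^sub>m n n"
proof (rule eq_matI)
  fix i j assume "i < dim_row (0\<^sub>m n n :: real mat)" "j < dim_col (0\<^sub>m n n :: real mat)"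
  hence ij: "i < n" "j < n" by auto
  have "(e \<cdot>\<^sub>m X) $$ (i,j) = 0" using Z ij by simp
  thus "X $$ (i,j) = (0\<^sub>m n n :: real mat) $$ (i,j)" using X ij e by simp
qed (insert X, auto)

lemma add_right_cancel_mat:
  assumes X: "(X::real mat) \<in> carrier_mat n n" and Y: "Y \<in> carrier_mat n n" and eq: "X + Y = X"
  shows "Y = 0\<^sub>m n n"
proof (rule eq_matI)
  fix i j assume "i < dim_row (0\<^sub>m n n :: real mat)" "j < dim_col (0\<^sub>m n n :: real mat)"
  hence ij: "i < n" "j < n" by auto
  have "(X + Y) $$ (i,j) = X $$ (i,j)" using eq by simp
  thus "Y $$ (i,j) = (0\<^sub>m n n :: real mat) $$ (i,j)" using X Y ij by simp
qed (insert Y, auto)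

lemma vectorize_zero: "vectorize (0\<^sub>m D D :: real mat) = 0\<^sub>v (D*D)"
proof (rule eq_vecI)
  fix i assume "i < dim_vec (0\<^sub>v (D*D) :: real vec)"
  hence i: "i < D*D" by simp
  show "vectorize (0\<^sub>m D D :: real mat) $ i = (0\<^sub>v (D*D) :: real vec) $ i"
    using idx_decomp(2,3)[OF i] i by (simp add: vectorize_def)
qed (simp add: vectorize_def)

lemma matz_zero: "matz D (0\<^sub>v (D*D)) = 0\<^sub>m D D"
  by (rule eq_matI, auto simp: matz_def idx_lt)


theorem lemma3:
  fixes D W V K J :: nat
    and Dm P0st P0m A :: "real mat"
    and I L :: "nat set"
    and s :: sharp
    and \<theta> :: "nat \<Rightarrow> nat \<times> nat"
    and c :: "nat \<Rightarrow> real"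
  assumes pos: "0 < D" "0 < W" "0 < V" "0 < K"
    and Dm: "Dm \<in> carrier_mat W (V * K)" "vec_space.rank W Dm = D"
    and I: "I \<subseteq> {..<W}" "card I = D"
    and L: "L \<subseteq> {..<V * K}" "card L = D"
    and Dsq: "vec_space.rank D (submatrix Dm I L) = D"
    and theta: "\<forall>j<J. fst (\<theta> j) < sel s W (V * K) \<and> snd (\<theta> j) < sel s W (V * K)"
    and P0: "P0st \<in> carrier_mat D W" "P0m \<in> carrier_mat D (V * K)"
            "transpose_mat P0st * P0m = Dm"
    and A: "A \<in> carrier_mat D D" "invertible_mat A"
    and P: "compatible D W (V * K) Dm s J \<theta> c
              (transpose_mat (inv_mat A) * P0st) (A * P0m)"
  shows "(\<forall>A'. A' \<in> carrier_mat D D \<and> invertible_mat A' \<and>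
            compatible D W (V * K) Dm s J \<theta> c
              (transpose_mat (inv_mat A') * P0st) (A' * P0m)
            \<longrightarrow> transpose_mat A' * A' = transpose_mat A * A)
         \<longleftrightarrow>
         (let R = sel (other s) (submatrix P0st UNIV I) (submatrix P0m UNIV L);
              p = (\<lambda>i. col (sel s P0st P0m) i);
              B = (\<lambda>j. (1/2::real) \<cdot>\<^sub>m (outer (p (fst (\<theta> j))) (p (snd (\<theta> j)))
                                     + outer (p (snd (\<theta> j))) (p (fst (\<theta> j)))))
          in vec_space.rank (D * D)
               (mat_of_cols (D * D) (map (\<lambda>j. vectorize (R * B j * transpose_mat R)) [0..<J]))
             = D * (D + 1) div 2)"
proof -
  define m where "m = sel s W (V * K)"
  define P0 where "P0 = sel s P0st P0m"
  have P0c: "P0 \<in> carrier_mat D m" unfolding P0_def m_def using P0 by (cases s, auto)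
  define pa where "pa = (\<lambda>j. col P0 (fst (\<theta> j)))"
  define pb where "pb = (\<lambda>j. col P0 (snd (\<theta> j)))"
  have pac: "pa j \<in> carrier_vec D" "pb j \<in> carrier_vec D" if "j < J" for j
    using theta that P0c unfolding pa_def pb_def m_def by auto
  define K0 where "K0 = (\<forall>X\<in>carrier_mat D D. transpose_mat X = X \<longrightarrow> (\<forall>j<J. pa j \<bullet> (X *\<^sub>v pb j) = 0) \<longrightarrow> X = 0\<^sub>m D D)"
  have compat: "compatible D W (V * K) Dm s J \<theta> c (transpose_mat (inv_mat A') * P0st) (A' * P0m) \<longleftrightarrow>
      (\<forall>j<J. pa j \<bullet> (Gm s A' *\<^sub>v pb j) = c j)"
    if "A' \<in> carrier_mat D D" "invertible_mat A'" for A'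
    using compat_iff[OF P0 theta that] unfolding pa_def pb_def P0_def .
  have cA: "\<forall>j<J. pa j \<bullet> (Gm s A *\<^sub>v pb j) = c j" using P compat[OF A] by simp
  have GA: "Gm s A \<in> carrier_mat D D" by (rule Gm_carrier[OF A])
  have U: "(\<forall>A'. A' \<in> carrier_mat D D \<and> invertible_mat A' \<and>
            compatible D W (V * K) Dm s J \<theta> c
              (transpose_mat (inv_mat A') * P0st) (A' * P0m)
            \<longrightarrow> transpose_mat A' * A' = transpose_mat A * A) \<longleftrightarrow> K0"
  proof
    assume Uniq: "\<forall>A'. A' \<in> carrier_mat D D \<and> invertible_mat A' \<and>
            compatible D W (V * K) Dm s J \<theta> c
              (transpose_mat (inv_mat A') * P0st) (A' * P0m)
            \<longrightarrow> transpose_mat A' * A' = transpose_mat A * A"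
    show K0 unfolding K0_def
    proof (intro ballI impI)
      fix X assume X: "X \<in> carrier_mat D D" and sym: "transpose_mat X = X"
        and qX: "\<forall>j<J. pa j \<bullet> (X *\<^sub>v pb j) = 0"
      obtain Ci where Ci: "Ci \<in> carrier_mat D D" "Cm s A * Ci = 1\<^sub>m D" "Ci * Cm s A = 1\<^sub>m D"
        using det_inverse_exists[OF Cm_props(1)[OF A] Cm_props(2)[OF A]] by auto
      define Y where "Y = transpose_mat Ci * X * Ci"
      have Yc: "Y \<in> carrier_mat D D" unfolding Y_def using Ci X by simp
      have Ysym: "transpose_mat Y = Y" unfolding Y_def by (rule congr_sym[OF Ci(1) X sym])
      obtain e where e: "e > 0" "\<forall>x. (\<exists>p<D. x p \<noteq> 0) \<longrightarrow> bf D (1\<^sub>m D + e \<cdot>\<^sub>m Y) x x > 0"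
        using pd_perturb[OF Yc] by auto
      have M'c: "1\<^sub>m D + e \<cdot>\<^sub>m Y \<in> carrier_mat D D" using Yc by simp
      obtain Vm where Vm: "Vm \<in> carrier_mat D D" "det Vm \<noteq> 0" "transpose_mat Vm * Vm = 1\<^sub>m D + e \<cdot>\<^sub>m Y"
        using pd_factor[OF M'c transpose_smult_add_one[OF Yc Ysym]] e(2) by blast
      have VV: "transpose_mat Vm * Vm = 1\<^sub>m D + e \<cdot>\<^sub>m (transpose_mat Ci * X * Ci)"
        using Vm(3) unfolding Y_def .
      define Wm where "Wm = Vm * Cm s A"
      have Wc: "Wm \<in> carrier_mat D D" unfolding Wm_def using Vm Cm_props(1)[OF A] by simp
      have dW: "det Wm \<noteq> 0" unfolding Wm_def
        using det_mult[OF Vm(1) Cm_props(1)[OF A]] Vm(2) Cm_props(2)[OF A] by simp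
      have WW: "transpose_mat Wm * Wm = Gm s A + e \<cdot>\<^sub>m X"
        unfolding Wm_def Cm_props(3)[OF A] by (rule congr_algebra[OF Cm_props(1)[OF A] Ci(1) Vm(1) X Ci(3) VV])
      obtain A' where A': "A' \<in> carrier_mat D D" "invertible_mat A'" "Gm s A' = transpose_mat Wm * Wm"
        using Gm_realize[OF Wc dW] by blast
      have "\<forall>j<J. pa j \<bullet> (Gm s A' *\<^sub>v pb j) = c j"
      proof (intro allI impI)
        fix j assume j: "j < J"
        have "pa j \<bullet> (Gm s A' *\<^sub>v pb j) = pa j \<bullet> (Gm s A *\<^sub>v pb j) + e * (pa j \<bullet> (X *\<^sub>v pb j))"
          unfolding A'(3) WW by (rule q_add_smult[OF pac[OF j] GA X])
        thus "pa j \<bullet> (Gm s A' *\<^sub>v pb j) = c j" using cA qX j by simp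
      qed
      hence "compatible D W (V * K) Dm s J \<theta> c (transpose_mat (inv_mat A') * P0st) (A' * P0m)"
        using compat[OF A'(1,2)] by simp
      hence "transpose_mat A' * A' = transpose_mat A * A" using Uniq A'(1,2) by blast
      hence "Gm s A' = Gm s A" using Gm_eq_iff[OF A A'(1,2)] by simp
      hence "Gm s A + e \<cdot>\<^sub>m X = Gm s A" using A'(3) WW by simp
      hence "e \<cdot>\<^sub>m X = 0\<^sub>m D D" by (rule add_right_cancel_mat[OF GA, rotated], insert X, simp)
      thus "X = 0\<^sub>m D D" using smult_zero_mat[OF X] e(1) by simp
    qed
  next
    assume Kz: K0
    show "\<forall>A'. A' \<in> carrier_mat D D \<and> invertible_mat A' \<and>
            compatible D W (V * K) Dm s J \<theta> c
              (transpose_mat (inv_mat A') * P0st) (A' * P0m)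
            \<longrightarrow> transpose_mat A' * A' = transpose_mat A * A"
    proof (intro allI impI, elim conjE)
      fix A' assume A'c: "A' \<in> carrier_mat D D" and A'i: "invertible_mat A'"
        and cp: "compatible D W (V * K) Dm s J \<theta> c (transpose_mat (inv_mat A') * P0st) (A' * P0m)"
      have cA': "\<forall>j<J. pa j \<bullet> (Gm s A' *\<^sub>v pb j) = c j" using cp compat[OF A'c A'i] by simp
      have GA': "Gm s A' \<in> carrier_mat D D" by (rule Gm_carrier[OF A'c A'i])
      define X where "X = Gm s A' - Gm s A"
      have Xc: "X \<in> carrier_mat D D" unfolding X_def using GA GA' by (intro carrier_matI, auto)
      have Xs: "transpose_mat X = X" unfolding X_def
        using transpose_minus[OF GA' GA] Gm_sym[OF A'c A'i] Gm_sym[OF A] by simp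
      have "\<forall>j<J. pa j \<bullet> (X *\<^sub>v pb j) = 0"
      proof (intro allI impI)
        fix j assume j: "j < J"
        show "pa j \<bullet> (X *\<^sub>v pb j) = 0" unfolding X_def
          using q_minus[OF pac[OF j] GA' GA] cA cA' j by simp
      qed
      hence "X = 0\<^sub>m D D" using Kz Xc Xs unfolding K0_def by blast
      hence "Gm s A' = Gm s A" unfolding X_def by (rule mat_minus_zero_eq[OF GA' GA])
      thus "transpose_mat A' * A' = transpose_mat A * A" using Gm_eq_iff[OF A A'c A'i] by simp
    qed
  qed
  define Rst where "Rst = submatrix P0st UNIV I"
  define Rm where "Rm = submatrix P0m UNIV L"
  have Rstc: "Rst \<in> carrier_mat D D" unfolding Rst_def by (rule submatrix_carrier[OF P0(1) I])
  have Rmc: "Rm \<in> carrier_mat D D" unfolding Rm_def by (rule submatrix_carrier[OF P0(2) L])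
  have RR: "transpose_mat Rst * Rm = submatrix Dm I L" unfolding Rst_def Rm_def P0(3)[symmetric]
    by (rule submatrix_prod[OF P0(1) P0(2) I L])
  have Sc: "submatrix Dm I L \<in> carrier_mat D D" unfolding RR[symmetric] using Rstc Rmc by simp
  have dS: "det (submatrix Dm I L) \<noteq> 0" using vec_space.det_rank_iff[OF Sc] Dsq by simp
  have "det (transpose_mat Rst) * det Rm \<noteq> 0"
    using det_mult[of "transpose_mat Rst" D Rm] Rstc Rmc RR dS by simp
  hence dRst: "det Rst \<noteq> 0" and dRm: "det Rm \<noteq> 0" using det_transpose[OF Rstc] by auto
  define R where "R = sel (other s) Rst Rm"
  have Rc: "R \<in> carrier_mat D D" unfolding R_def using Rstc Rmc by (cases s, auto)
  have dR: "det R \<noteq> 0" unfolding R_def using dRst dRm by (cases s, auto)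
  obtain Ri where Ri: "Ri \<in> carrier_mat D D" "R * Ri = 1\<^sub>m D" "Ri * R = 1\<^sub>m D"
    using det_inverse_exists[OF Rc dR] by auto
  define Bj where "Bj = (\<lambda>j. (1/2::real) \<cdot>\<^sub>m (outer (pa j) (pb j) + outer (pb j) (pa j)))"
  have Bc: "Bj j \<in> carrier_mat D D" if j: "j < J" for j
    unfolding Bj_def using outer_carrier[OF pac[OF j]] outer_carrier[OF pac(2)[OF j] pac(1)[OF j]] by simp
  have Bs: "transpose_mat (Bj j) = Bj j" if j: "j < J" for j
  proof (rule eq_matI)
    fix a b assume "a < dim_row (Bj j)" "b < dim_col (Bj j)"
    hence ab: "a < D" "b < D" using Bc[OF j] by auto
    show "transpose_mat (Bj j) $$ (a,b) = Bj j $$ (a,b)"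
      unfolding Bj_def using ab pac[OF j] by (simp add: outer_def)
  qed (insert Bc[OF j], auto)
  define Mj where "Mj = (\<lambda>j. R * Bj j * transpose_mat R)"
  have Mc: "Mj j \<in> carrier_mat D D" if j: "j < J" for j
    unfolding Mj_def using Rc Bc[OF j] by simp
  have Ms: "transpose_mat (Mj j) = Mj j" if j: "j < J" for j
    using congr_sym[of "transpose_mat R" D "Bj j"] Rc Bc[OF j] Bs[OF j] unfolding Mj_def by simp
  define vs where "vs = map (\<lambda>j. vectorize (Mj j)) [0..<J]"
  have vsS: "set vs \<subseteq> SymV D" unfolding vs_def using vectorize_SymV[OF Mc Ms] by auto
  have key: "vectorize (Mj j) \<bullet> z = pa j \<bullet> ((transpose_mat R * matz D z * R) *\<^sub>v pb j)"
    if j: "j < J" and zS: "z \<in> SymV D" for j z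
  proof -
    have zc: "z \<in> carrier_vec (D*D)" using SymV_carrier zS by auto
    have Z: "matz D z \<in> carrier_mat D D" by (rule matz_carrier)
    have XRc: "transpose_mat R * matz D z * R \<in> carrier_mat D D" using Rc Z by simp
    have XRs: "transpose_mat (transpose_mat R * matz D z * R) = transpose_mat R * matz D z * R"
      by (rule congr_sym[OF Rc Z matz_sym[OF zS]])
    have "vectorize (Mj j) \<bullet> z = vectorize (Mj j) \<bullet> vectorize (matz D z)" using vectorize_matz[OF zc] by simp
    also have "\<dots> = frob D (Mj j) (matz D z)" by (rule dot_vectorize[OF Mc[OF j] Z])
    also have "\<dots> = frob D (Bj j) (transpose_mat R * matz D z * R)" unfolding Mj_def
      by (rule frob_congr[OF Rc Bc[OF j] Z])
    also have "\<dots> = pa j \<bullet> ((transpose_mat R * matz D z * R) *\<^sub>v pb j)" unfolding Bj_def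
      by (rule frob_B[OF pac[OF j] XRc XRs])
    finally show ?thesis .
  qed
  have Rk: "vec_space.rank (D*D) (mat_of_cols (D*D) vs) = D * (D + 1) div 2 \<longleftrightarrow> K0"
    unfolding rank_crit[OF vsS]
  proof
    assume H: "\<forall>z\<in>SymV D. (\<forall>v\<in>set vs. v \<bullet> z = 0) \<longrightarrow> z = 0\<^sub>v (D*D)"
    show K0 unfolding K0_def
    proof (intro ballI impI)
      fix X assume X: "X \<in> carrier_mat D D" and sym: "transpose_mat X = X"
        and qX: "\<forall>j<J. pa j \<bullet> (X *\<^sub>v pb j) = 0"
      define Z where "Z = transpose_mat Ri * X * Ri"
      have Zc: "Z \<in> carrier_mat D D" unfolding Z_def using Ri X by simp
      have Zs: "transpose_mat Z = Z" unfolding Z_def by (rule congr_sym[OF Ri(1) X sym])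
      define z where "z = vectorize Z"
      have zS: "z \<in> SymV D" unfolding z_def by (rule vectorize_SymV[OF Zc Zs])
      have mz: "matz D z = Z" unfolding z_def by (rule matz_vectorize[OF Zc])
      have bk: "transpose_mat R * Z * R = X" unfolding Z_def by (rule cancel_congr[OF Rc Ri(1) X Ri(3)])
      have "\<forall>v\<in>set vs. v \<bullet> z = 0"
      proof
        fix v assume "v \<in> set vs"
        then obtain j where j: "j < J" "v = vectorize (Mj j)" unfolding vs_def by auto
        show "v \<bullet> z = 0" using key[OF j(1) zS] mz bk qX j by simp
      qed
      hence "z = 0\<^sub>v (D*D)" using H zS by blast
      hence "Z = 0\<^sub>m D D" using mz matz_zero[of D] by simp
      thus "X = 0\<^sub>m D D" using bk Rc by simp
    qed
  next
    assume Kz: K0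
    show "\<forall>z\<in>SymV D. (\<forall>v\<in>set vs. v \<bullet> z = 0) \<longrightarrow> z = 0\<^sub>v (D*D)"
    proof (intro ballI impI)
      fix z assume zS: "z \<in> SymV D" and orth: "\<forall>v\<in>set vs. v \<bullet> z = 0"
      have zc: "z \<in> carrier_vec (D*D)" using SymV_carrier zS by auto
      define Z where "Z = matz D z"
      have Zc: "Z \<in> carrier_mat D D" unfolding Z_def by (rule matz_carrier)
      have Zs: "transpose_mat Z = Z" unfolding Z_def by (rule matz_sym[OF zS])
      define X where "X = transpose_mat R * Z * R"
      have Xc: "X \<in> carrier_mat D D" unfolding X_def using Rc Zc by simp
      have Xs: "transpose_mat X = X" unfolding X_def by (rule congr_sym[OF Rc Zc Zs])
      have "\<forall>j<J. pa j \<bullet> (X *\<^sub>v pb j) = 0"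
      proof (intro allI impI)
        fix j assume j: "j < J"
        have "vectorize (Mj j) \<in> set vs" unfolding vs_def using j by auto
        thus "pa j \<bullet> (X *\<^sub>v pb j) = 0" using orth key[OF j zS] unfolding X_def Z_def by simp
      qed
      hence X0: "X = 0\<^sub>m D D" using Kz Xc Xs unfolding K0_def by blast
      have "transpose_mat Ri * X * Ri = Z" unfolding X_def by (rule cancel_congr[OF Ri(1) Rc Zc Ri(2)])
      hence "Z = 0\<^sub>m D D" using X0 Ri by simp
      hence "vectorize Z = 0\<^sub>v (D*D)" using vectorize_zero by simp
      thus "z = 0\<^sub>v (D*D)" unfolding Z_def using vectorize_matz[OF zc] by simp
    qed
  qed
  have RHS: "(let R = sel (other s) (submatrix P0st UNIV I) (submatrix P0m UNIV L);
              p = (\<lambda>i. col (sel s P0st P0m) i);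
              B = (\<lambda>j. (1/2::real) \<cdot>\<^sub>m (outer (p (fst (\<theta> j))) (p (snd (\<theta> j)))
                                     + outer (p (snd (\<theta> j))) (p (fst (\<theta> j)))))
          in vec_space.rank (D * D)
               (mat_of_cols (D * D) (map (\<lambda>j. vectorize (R * B j * transpose_mat R)) [0..<J]))
             = D * (D + 1) div 2) \<longleftrightarrow> vec_space.rank (D*D) (mat_of_cols (D*D) vs) = D * (D + 1) div 2"
    unfolding vs_def Mj_def Bj_def R_def Rst_def Rm_def pa_def pb_def P0_def Let_def ..
  show ?thesis using U Rk RHS by simp
qed


end
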